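(* Let $A$ be a quasi-local algebra over $\mathbb{Z}$ with finite-dimensional local algebras $A_I$ satisfying weak algebraic Haag duality. An $A$-$A$ C$^\star$-correspondence $X$ is a DHR bimodule if and only if there exists $S\ge 0$ such that for every interval $I\subseteq\mathbb{Z}$ with $|I|\ge S$ there is a finite projective basis of $X$ contained in $X_I$.
   Context: A quasi-local algebra over $\mathbb{Z}$ is a unital C$^\star$-algebra $A$ with unital finite-dimensional C$^\star$-subalgebras $A_I$ for intervals $I\subseteq\mathbb{Z}$, increasing in $I$, with $[A_I,A_J]=0$ for disjoint $I,J$ and $\bigcup_IA_I$ norm dense. Weak algebraic Haag duality: there is $T\ge0$ such that $A_{I^c}'\cap A\subseteq A_{I^{+T}}$ for intervals $I$, where $I^{+T}$ is the $T$-neighbourhood of $I$. An $A$-$A$ correspondence is an $A$-$A$ bimodule with a right $A$-valued inner product making it a right Hilbert C$^\star$-module on which $A$ acts on the left by adjointable operators. For such $X$, $X_I=\{x\in X: ax=xa\ \forall a\in A_{I^c}\}$. $X$ is a DHR bimodule if there is $R\ge0$ such that for every interval $I$ with $|I|\ge R$, $\dim X_I<\infty$ and $X=X_IA$. A finite projective basis of $X$ is a finite set $\{b_i\}\subseteq X$ with $x=\sum_i b_i\langle b_i|x\rangle$ for all $x\in X$. *)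

theory Defs
  imports "HOL-Analysis.Analysis"
begin

text \<open>Unital C*-algebras are modelled on a type 'a of class real_normed_algebra_1 and banach
  (norm, ring structure, unit, completeness), together with an explicit complex scalar
  multiplication sc and an involution st.\<close>

definition cstar_algebra :: "(complex \<Rightarrow> 'a::{real_normed_algebra_1,banach} \<Rightarrow> 'a) \<Rightarrow> ('a \<Rightarrow> 'a) \<Rightarrow> bool" where
  "cstar_algebra sc st \<longleftrightarrow>
     (\<forall>r a. sc (complex_of_real r) a = r *\<^sub>R a) \<and>
     (\<forall>c d a. sc (c + d) a = sc c a + sc d a) \<and>
     (\<forall>c a b. sc c (a + b) = sc c a + sc c b) \<and>
     (\<forall>c d a. sc (c * d) a = sc c (sc d a)) \<and>
     (\<forall>c a b. sc c (a * b) = sc c a * b) \<and>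
     (\<forall>c a b. sc c (a * b) = a * sc c b) \<and>
     (\<forall>c a. norm (sc c a) = cmod c * norm a) \<and>
     (\<forall>a. st (st a) = a) \<and>
     (\<forall>a b. st (a + b) = st a + st b) \<and>
     (\<forall>c a. st (sc c a) = sc (cnj c) (st a)) \<and>
     (\<forall>a b. st (a * b) = st b * st a) \<and>
     (\<forall>a. norm (st a * a) = norm a ^ 2)"

definition star_subalg :: "(complex \<Rightarrow> 'a::ring_1 \<Rightarrow> 'a) \<Rightarrow> ('a \<Rightarrow> 'a) \<Rightarrow> 'a set \<Rightarrow> bool" where
  "star_subalg sc st B \<longleftrightarrow> 0 \<in> B \<and> 1 \<in> B \<and>
     (\<forall>a\<in>B. \<forall>b\<in>B. a + b \<in> B \<and> a * b \<in> B) \<and>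
     (\<forall>c. \<forall>a\<in>B. sc c a \<in> B) \<and> (\<forall>a\<in>B. st a \<in> B)"

definition fin_dim_C :: "(complex \<Rightarrow> 'v::comm_monoid_add \<Rightarrow> 'v) \<Rightarrow> 'v set \<Rightarrow> bool" where
  "fin_dim_C sc S \<longleftrightarrow> (\<exists>B. finite B \<and> B \<subseteq> S \<and> S = {\<Sum>b\<in>B. sc (c b) b | c. True})"

definition interval :: "int set \<Rightarrow> bool" where
  "interval I \<longleftrightarrow> (\<exists>a b. a \<le> b \<and> I = {a..b})"

definition nbhd :: "nat \<Rightarrow> int set \<Rightarrow> int set" where
  "nbhd T I = {k. \<exists>i\<in>I. \<bar>k - i\<bar> \<le> int T}"

definition gen_cstar :: "(complex \<Rightarrow> 'a::{real_normed_algebra_1,banach} \<Rightarrow> 'a) \<Rightarrow> ('a \<Rightarrow> 'a) \<Rightarrow> 'a set \<Rightarrow> 'a set" where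
  "gen_cstar sc st S = \<Inter>{B. S \<subseteq> B \<and> star_subalg sc st B \<and> closed B}"

definition Acompl :: "(complex \<Rightarrow> 'a::{real_normed_algebra_1,banach} \<Rightarrow> 'a) \<Rightarrow> ('a \<Rightarrow> 'a) \<Rightarrow> (int set \<Rightarrow> 'a set) \<Rightarrow> int set \<Rightarrow> 'a set" where
  "Acompl sc st Aloc I = gen_cstar sc st (\<Union>{Aloc J | J. interval J \<and> J \<inter> I = {}})"

definition quasi_local :: "(complex \<Rightarrow> 'a::{real_normed_algebra_1,banach} \<Rightarrow> 'a) \<Rightarrow> ('a \<Rightarrow> 'a) \<Rightarrow> (int set \<Rightarrow> 'a set) \<Rightarrow> bool" where
  "quasi_local sc st Aloc \<longleftrightarrow> cstar_algebra sc st \<and>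
     (\<forall>I. interval I \<longrightarrow> star_subalg sc st (Aloc I) \<and> fin_dim_C sc (Aloc I)) \<and>
     (\<forall>I J. interval I \<longrightarrow> interval J \<longrightarrow> I \<subseteq> J \<longrightarrow> Aloc I \<subseteq> Aloc J) \<and>
     (\<forall>I J. interval I \<longrightarrow> interval J \<longrightarrow> I \<inter> J = {} \<longrightarrow>
        (\<forall>a\<in>Aloc I. \<forall>b\<in>Aloc J. a * b = b * a)) \<and>
     closure (\<Union>{Aloc I | I. interval I}) = UNIV"

definition weak_haag :: "(complex \<Rightarrow> 'a::{real_normed_algebra_1,banach} \<Rightarrow> 'a) \<Rightarrow> ('a \<Rightarrow> 'a) \<Rightarrow> (int set \<Rightarrow> 'a set) \<Rightarrow> bool" where
  "weak_haag sc st Aloc \<longleftrightarrow> (\<exists>T::nat. \<forall>I. interval I \<longrightarrow>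
     {x. \<forall>a\<in>Acompl sc st Aloc I. x * a = a * x} \<subseteq> Aloc (nbhd T I))"

text \<open>A-A correspondence on a type 'x: complex scalar multiplication scX, right action ra,
  left action la, right A-valued inner product ip (linear in the second variable).\<close>
definition correspondence ::
  "(complex \<Rightarrow> 'a::{real_normed_algebra_1,banach} \<Rightarrow> 'a) \<Rightarrow> ('a \<Rightarrow> 'a) \<Rightarrow>
   (complex \<Rightarrow> 'x::ab_group_add \<Rightarrow> 'x) \<Rightarrow> ('x \<Rightarrow> 'a \<Rightarrow> 'x) \<Rightarrow> ('a \<Rightarrow> 'x \<Rightarrow> 'x) \<Rightarrow> ('x \<Rightarrow> 'x \<Rightarrow> 'a) \<Rightarrow> bool" where
  "correspondence sc st scX ra la ip \<longleftrightarrow>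
     \<comment> \<open>complex vector space\<close>
     (\<forall>c d x. scX (c + d) x = scX c x + scX d x) \<and>
     (\<forall>c x y. scX c (x + y) = scX c x + scX c y) \<and>
     (\<forall>c d x. scX (c * d) x = scX c (scX d x)) \<and>
     (\<forall>x. scX 1 x = x) \<and>
     \<comment> \<open>right A-module\<close>
     (\<forall>x y a. ra (x + y) a = ra x a + ra y a) \<and>
     (\<forall>x a b. ra x (a + b) = ra x a + ra x b) \<and>
     (\<forall>x a b. ra x (a * b) = ra (ra x a) b) \<and>
     (\<forall>x. ra x 1 = x) \<and>
     (\<forall>c x a. ra (scX c x) a = scX c (ra x a)) \<and>
     (\<forall>c x a. ra x (sc c a) = scX c (ra x a)) \<and>
     \<comment> \<open>left A-module, commuting with the right action\<close>
     (\<forall>a b x. la (a + b) x = la a x + la b x) \<and>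
     (\<forall>a x y. la a (x + y) = la a x + la a y) \<and>
     (\<forall>a b x. la (a * b) x = la a (la b x)) \<and>
     (\<forall>x. la 1 x = x) \<and>
     (\<forall>c a x. la (sc c a) x = scX c (la a x)) \<and>
     (\<forall>c a x. la a (scX c x) = scX c (la a x)) \<and>
     (\<forall>a x b. la a (ra x b) = ra (la a x) b) \<and>
     \<comment> \<open>left action by adjointable operators (a *-representation)\<close>
     (\<forall>a x y. ip (la a x) y = ip x (la (st a) y)) \<and>
     \<comment> \<open>right A-valued inner product\<close>
     (\<forall>x y z. ip x (y + z) = ip x y + ip x z) \<and>
     (\<forall>c x y. ip x (scX c y) = sc c (ip x y)) \<and>
     (\<forall>x y a. ip x (ra y a) = ip x y * a) \<and>
     (\<forall>x y. ip y x = st (ip x y)) \<and>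
     (\<forall>x. \<exists>b. ip x x = st b * b) \<and>
     (\<forall>x. ip x x = 0 \<longrightarrow> x = 0) \<and>
     \<comment> \<open>completeness for the norm sqrt (norm (ip x x))\<close>
     (\<forall>f::nat \<Rightarrow> 'x. (\<forall>e>0. \<exists>N. \<forall>m\<ge>N. \<forall>n\<ge>N. sqrt (norm (ip (f m - f n) (f m - f n))) < e) \<longrightarrow>
        (\<exists>l. (\<lambda>n. sqrt (norm (ip (f n - l) (f n - l)))) \<longlonglongrightarrow> 0))"

definition Xloc ::
  "(complex \<Rightarrow> 'a::{real_normed_algebra_1,banach} \<Rightarrow> 'a) \<Rightarrow> ('a \<Rightarrow> 'a) \<Rightarrow> (int set \<Rightarrow> 'a set) \<Rightarrow>
   ('x \<Rightarrow> 'a \<Rightarrow> 'x) \<Rightarrow> ('a \<Rightarrow> 'x \<Rightarrow> 'x) \<Rightarrow> int set \<Rightarrow> 'x set" where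
  "Xloc sc st Aloc ra la I = {x. \<forall>a\<in>Acompl sc st Aloc I. la a x = ra x a}"

definition right_span :: "('x::comm_monoid_add \<Rightarrow> 'a \<Rightarrow> 'x) \<Rightarrow> 'x set \<Rightarrow> 'x set" where
  "right_span ra S = {\<Sum>i<n. ra (xs i) (ys i) | (n::nat) xs ys. \<forall>i<n. xs i \<in> S}"

definition DHR_bimodule ::
  "(complex \<Rightarrow> 'a::{real_normed_algebra_1,banach} \<Rightarrow> 'a) \<Rightarrow> ('a \<Rightarrow> 'a) \<Rightarrow> (int set \<Rightarrow> 'a set) \<Rightarrow>
   (complex \<Rightarrow> 'x::ab_group_add \<Rightarrow> 'x) \<Rightarrow> ('x \<Rightarrow> 'a \<Rightarrow> 'x) \<Rightarrow> ('a \<Rightarrow> 'x \<Rightarrow> 'x) \<Rightarrow> bool" where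
  "DHR_bimodule sc st Aloc scX ra la \<longleftrightarrow> (\<exists>R::nat. \<forall>I. interval I \<longrightarrow> card I \<ge> R \<longrightarrow>
     fin_dim_C scX (Xloc sc st Aloc ra la I) \<and> right_span ra (Xloc sc st Aloc ra la I) = UNIV)"

definition proj_basis :: "('x::comm_monoid_add \<Rightarrow> 'a \<Rightarrow> 'x) \<Rightarrow> ('x \<Rightarrow> 'x \<Rightarrow> 'a) \<Rightarrow> 'x set \<Rightarrow> bool" where
  "proj_basis ra ip B \<longleftrightarrow> finite B \<and> (\<forall>x. x = (\<Sum>b\<in>B. ra b (ip b x)))"

end

theory Submission
  imports Defs "HOL-Computational_Algebra.Fundamental_Theorem_Algebra"
begin


locale cstar =
  fixes sc :: "complex \<Rightarrow> 'a::{real_normed_algebra_1,banach} \<Rightarrow> 'a" and st :: "'a \<Rightarrow> 'a"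
  assumes cs: "cstar_algebra sc st"
begin

lemma sc_real: "sc (complex_of_real r) a = r *\<^sub>R a" using cs unfolding cstar_algebra_def by simp
lemma sc_add_left: "sc (c + d) a = sc c a + sc d a" using cs unfolding cstar_algebra_def by simp
lemma sc_add_right: "sc c (a + b) = sc c a + sc c b" using cs unfolding cstar_algebra_def by simp
lemma sc_sc: "sc c (sc d a) = sc (c * d) a" using cs unfolding cstar_algebra_def by simp
lemma sc_mult_left: "sc c a * b = sc c (a * b)" using cs unfolding cstar_algebra_def by simp
lemma sc_mult_right: "a * sc c b = sc c (a * b)" using cs unfolding cstar_algebra_def by (metis (no_types))
lemma norm_sc: "norm (sc c a) = cmod c * norm a" using cs unfolding cstar_algebra_def by simp
lemma st_st[simp]: "st (st a) = a" using cs unfolding cstar_algebra_def by simp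
lemma st_add: "st (a + b) = st a + st b" using cs unfolding cstar_algebra_def by simp
lemma st_sc: "st (sc c a) = sc (cnj c) (st a)" using cs unfolding cstar_algebra_def by simp
lemma st_mult: "st (a * b) = st b * st a" using cs unfolding cstar_algebra_def by simp
lemma cstar_id: "norm (st a * a) = norm a ^ 2" using cs unfolding cstar_algebra_def by simp

lemma sc_one[simp]: "sc 1 a = a" using sc_real[of 1 a] by simp

sublocale vs: vector_space sc
  by unfold_locales (simp_all add: sc_add_right sc_add_left sc_sc)

lemma sc_zero_right[simp]: "sc c 0 = 0" by (rule vs.scale_zero_right)
lemma sc_zero_left[simp]: "sc 0 a = 0" by (rule vs.scale_zero_left)
lemma sc_minus_left: "sc (- c) a = - sc c a" by (rule vs.scale_minus_left)
lemma sc_minus_right: "sc c (- a) = - sc c a" by (rule vs.scale_minus_right)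
lemma sc_diff_right: "sc c (a - b) = sc c a - sc c b" by (rule vs.scale_right_diff_distrib)
lemma sc_diff_left: "sc (c - d) a = sc c a - sc d a" by (rule vs.scale_left_diff_distrib)
lemma sc_of_real: "sc (of_real r) a = r *\<^sub>R a" by (rule sc_real)

lemma st_zero[simp]: "st 0 = 0"
  using st_add[of 0 0] by simp
lemma st_minus: "st (- a) = - st a"
  using st_add[of a "-a"] by (simp add: eq_neg_iff_add_eq_0 add.commute)
lemma st_diff: "st (a - b) = st a - st b"
  using st_add[of a "-b"] st_minus[of b] by simp
lemma st_one[simp]: "st 1 = 1"
proof -
  have "st 1 = st 1 * 1" by simp
  hence "st (st 1) = st (st 1 * 1)" by simp
  also have "\<dots> = st 1 * st (st 1)" by (rule st_mult)
  finally show ?thesis by simp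
qed
lemma st_scaleR: "st (r *\<^sub>R a) = r *\<^sub>R st a"
  using st_sc[of "complex_of_real r" a] by (simp add: sc_real)
lemma st_sum: "st (sum f A) = sum (\<lambda>x. st (f x)) A"
  by (induction A rule: infinite_finite_induct) (auto simp: st_add)
lemma sc_sum_right: "sc c (sum f A) = sum (\<lambda>x. sc c (f x)) A"
  by (rule vs.scale_sum_right)

lemma norm_st_le: "norm a \<le> norm (st a)"
proof (cases "norm a = 0")
  case False
  have "norm a ^ 2 \<le> norm (st a) * norm a" using cstar_id[of a] norm_mult_ineq[of "st a" a] by simp
  thus ?thesis using False by (simp add: power2_eq_square)
qed simp
lemma norm_st[simp]: "norm (st a) = norm a"
  using norm_st_le[of a] norm_st_le[of "st a"] by simp

lemma cstar_sa: "st h = h \<Longrightarrow> norm (h * h) = norm h ^ 2"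
  using cstar_id[of h] by simp

lemma st_zero_iff: "st y * y = 0 \<Longrightarrow> y = 0"
  using cstar_id[of y] by simp

lemma proj_norm: assumes "st q = q" "q * q = q" shows "norm q = 0 \<or> norm q = 1"
  using cstar_sa[of q] assms by (auto simp: power2_eq_square)

lemma proj_norm_le: assumes "st q = q" "q * q = q" shows "norm q \<le> 1"
  using proj_norm[OF assms] by auto

lemma proj_norm1: assumes "st q = q" "q * q = q" "q \<noteq> 0" shows "norm q = 1"
  using proj_norm[OF assms(1,2)] assms(3) by auto

definition pev :: "'a \<Rightarrow> complex poly \<Rightarrow> 'a" where
  "pev h f = (\<Sum>i\<le>degree f. sc (coeff f i) (h ^ i))"

lemma pev_bound: assumes "degree f \<le> n" shows "pev h f = (\<Sum>i\<le>n. sc (coeff f i) (h ^ i))"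
  unfolding pev_def
  by (rule sum.mono_neutral_left) (use assms in \<open>auto simp: coeff_eq_0\<close>)

lemma pev_add: "pev h (f + g) = pev h f + pev h g"
proof -
  let ?n = "max (degree f) (degree g)"
  have "degree (f + g) \<le> ?n" by (rule degree_add_le_max)
  then show ?thesis
    by (simp add: pev_bound[of _ ?n] sc_add_left sum.distrib)
qed

lemma pev_smult: "pev h (smult c f) = sc c (pev h f)"
  by (simp add: pev_bound[OF degree_smult_le[of c f]] pev_def sc_sum_right sc_sc)

lemma pev_0[simp]: "pev h 0 = 0" by (simp add: pev_def)

lemma pev_pCons: "pev h (pCons a f) = sc a 1 + h * pev h f"
proof -
  have d: "degree (pCons a f) \<le> Suc (degree f)" by (simp add: degree_pCons_le)
  have "pev h (pCons a f) = (\<Sum>i\<le>Suc (degree f). sc (coeff (pCons a f) i) (h ^ i))"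
    by (rule pev_bound[OF d])
  also have "\<dots> = sc a 1 + (\<Sum>i\<le>degree f. sc (coeff f i) (h ^ Suc i))"
    by (subst sum.atMost_Suc_shift) simp
  also have "(\<Sum>i\<le>degree f. sc (coeff f i) (h ^ Suc i)) = h * pev h f"
    by (simp add: pev_def sum_distrib_left sc_mult_right)
  finally show ?thesis .
qed

lemma pev_const: "pev h [:c:] = sc c 1"
  using pev_pCons[where h=h and a=c and f=0] by simp

lemma pev_mult: "pev h (f * g) = pev h f * pev h g"
proof (induction f rule: pCons_induct)
  case (pCons a f)
  have "pev h (pCons a f * g) = sc a (pev h g) + h * pev h (f * g)"
    by (simp add: pev_add pev_smult pev_pCons)
  also have "\<dots> = pev h (pCons a f) * pev h g"
    by (simp add: pev_pCons pCons distrib_right sc_mult_left mult.assoc)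
  finally show ?case .
qed simp

lemma pev_one[simp]: "pev h 1 = 1"
  using pev_const[of h 1] by (simp add: one_pCons)

lemma pev_X: "pev h [:0, 1:] = h"
  using pev_pCons[where h=h and a=0 and f="[:1:]"] by (simp add: pev_const)

lemma pev_lin: "pev h [:c, 1:] = h + sc c 1"
  using pev_pCons[where h=h and a=c and f="[:1:]"] by (simp add: pev_const add.commute)

lemma pev_minus: "pev h (- f) = - pev h f"
  using pev_add[of h f "-f"] by (simp add: eq_neg_iff_add_eq_0 add.commute)

lemma pev_diff: "pev h (f - g) = pev h f - pev h g"
  using pev_add[of h f "-g"] pev_minus[of h g] by simp

lemma pev_power: "pev h (f ^ n) = pev h f ^ n"
  by (induction n) (simp_all add: pev_mult)

lemma pev_sum: "pev h (sum f A) = sum (\<lambda>x. pev h (f x)) A"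
  by (induction A rule: infinite_finite_induct) (auto simp: pev_add)


lemma pev_monom: "pev h (monom c n) = sc c (h ^ n)"
proof -
  have "pev h (monom c n) = (\<Sum>i\<le>n. sc (coeff (monom c n) i) (h ^ i))"
    by (rule pev_bound) (simp add: degree_monom_le)
  also have "\<dots> = sc c (h ^ n)"
    by (simp add: coeff_monom if_distrib[of "\<lambda>c. sc c _"] sum.delta cong: if_cong)
  finally show ?thesis .
qed

lemma pev_comm: "pev h f * pev h g = pev h g * pev h f"
  by (metis pev_mult mult.commute)

lemma pev_comm_h: "pev h f * h = h * pev h f"
  using pev_comm[of h f "[:0,1:]"] by (simp add: pev_X)

lemma subalg_power: assumes "star_subalg sc st D" "h \<in> D" shows "h ^ n \<in> D"
  using assms by (induction n) (auto simp: star_subalg_def)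

lemma subalg_sum: assumes "star_subalg sc st D" "\<And>x. x \<in> A \<Longrightarrow> f x \<in> D" shows "sum f A \<in> D"
  using assms(2) by (induction A rule: infinite_finite_induct) (use assms(1) in \<open>auto simp: star_subalg_def\<close>)

lemma pev_in: assumes "star_subalg sc st D" "h \<in> D" shows "pev h f \<in> D"
  unfolding pev_def
  by (rule subalg_sum[OF assms(1)]) (use assms subalg_power[OF assms] in \<open>auto simp: star_subalg_def\<close>)

lemma st_power_sa: "st h = h \<Longrightarrow> st (h ^ n) = h ^ n"
  by (induction n) (auto simp: st_mult power_commutes)

lemma pev_st: assumes "st h = h" shows "st (pev h f) = pev h (map_poly cnj f)"
proof -
  have "degree (map_poly cnj f) \<le> degree f" by (simp add: degree_map_poly)
  then have "pev h (map_poly cnj f) = (\<Sum>i\<le>degree f. sc (coeff (map_poly cnj f) i) (h ^ i))"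
    by (rule pev_bound)
  then show ?thesis
    by (simp add: pev_def st_sum st_sc st_power_sa[OF assms] coeff_map_poly)
qed

lemma fin_dim_span: assumes "fin_dim_C sc C" obtains B where "finite B" "B \<subseteq> C" "C = vs.span B"
proof -
  obtain B where B: "finite B" "B \<subseteq> C" "C = {\<Sum>b\<in>B. sc (c b) b | c. True}"
    using assms unfolding fin_dim_C_def by blast
  have "C = vs.span B" unfolding vs.span_finite[OF B(1)] B(3) by auto
  with B that show ?thesis by blast
qed

lemma annih: assumes D: "star_subalg sc st C" "fin_dim_C sc C" and h: "h \<in> C"
  shows "\<exists>f. f \<noteq> 0 \<and> pev h f = 0"
proof -
  obtain B where B: "finite B" "B \<subseteq> C" "C = vs.span B" using fin_dim_span[OF D(2)] by blast
  define n where "n = card B"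
  show ?thesis
  proof (cases "inj_on (\<lambda>i. h ^ i) {..n}")
    case False
    then obtain i j where ij: "i \<noteq> j" "h ^ i = h ^ j" unfolding inj_on_def by blast
    let ?f = "monom (1::complex) i - monom 1 j"
    have "coeff ?f i = 1" using ij by (simp add: coeff_monom)
    hence "?f \<noteq> 0" by (metis coeff_0 one_neq_zero)
    moreover have "pev h ?f = 0" by (simp add: pev_diff pev_monom ij)
    ultimately show ?thesis by blast
  next
    case True
    define P where "P = (\<lambda>i. h ^ i) ` {..n}"
    have cardP: "card P = Suc n" unfolding P_def using card_image[OF True] by simp
    have PC: "P \<subseteq> vs.span B" unfolding P_def using subalg_power[OF D(1) h] B(3) by auto
    have "vs.dependent P"
    proof (rule ccontr)
      assume "\<not> vs.dependent P"
      from vs.independent_span_bound[OF B(1) this PC] cardP n_def show False by simp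
    qed
    then obtain u v where uv: "v \<in> P" "u v \<noteq> 0" "(\<Sum>v\<in>P. sc (u v) v) = 0"
      using vs.dependent_finite[of P] unfolding P_def by auto
    define f where "f = (\<Sum>i\<le>n. monom (u (h ^ i)) i)"
    have "pev h f = (\<Sum>i\<le>n. sc (u (h ^ i)) (h ^ i))"
      unfolding f_def pev_sum pev_monom ..
    also have "\<dots> = (\<Sum>v\<in>P. sc (u v) v)"
      unfolding P_def by (subst sum.reindex[OF True]) simp
    finally have ev: "pev h f = 0" using uv by simp
    obtain i where i: "i \<le> n" "v = h ^ i" using uv(1) unfolding P_def by auto
    have "coeff f i = (\<Sum>j\<le>n. coeff (monom (u (h ^ j)) j) i)" unfolding f_def by (simp add: coeff_sum)
    also have "\<dots> = u (h ^ i)" using i by (simp add: coeff_monom)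
    finally have "f \<noteq> 0" using uv i by auto
    with ev show ?thesis by blast
  qed
qed

definition pfam :: "real set \<Rightarrow> (real \<Rightarrow> 'a) \<Rightarrow> bool" where
  "pfam L P \<longleftrightarrow> finite L \<and> (\<forall>l\<in>L. st (P l) = P l \<and> P l * P l = P l \<and> P l \<noteq> 0) \<and>
     (\<forall>l\<in>L. \<forall>m\<in>L. l \<noteq> m \<longrightarrow> P l * P m = 0) \<and> sum P L = 1"

lemma sc_eq_0: "sc c a = 0 \<Longrightarrow> c = 0 \<or> a = 0"
  using norm_sc[of c a] by auto

lemma poly_many_roots_zero:
  fixes D :: "complex poly"
  assumes "finite R" "degree D < card R" "\<And>t. t \<in> R \<Longrightarrow> poly D t = 0"
  shows "D = 0"
proof (rule ccontr)
  assume "D \<noteq> 0"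
  have "R \<subseteq> {x. poly D x = 0}" using assms(3) by auto
  hence "card R \<le> card {x. poly D x = 0}" using card_mono[OF poly_roots_finite[OF \<open>D \<noteq> 0\<close>]] by blast
  also have "\<dots> \<le> degree D" by (rule card_poly_roots_bound[OF \<open>D \<noteq> 0\<close>])
  finally show False using assms(2) by simp
qed

lemma degree_lin_mult: "g \<noteq> (0::complex poly) \<Longrightarrow> degree ([:-z,1:] * g) = Suc (degree g)"
  using degree_mult_eq[of "[:-z,1:]" g] by simp

lemma degree_lin2_mult: "g \<noteq> (0::complex poly) \<Longrightarrow> degree ([:-z,1:]^2 * g) = Suc (Suc (degree g))"
  using degree_mult_eq[of "[:-z,1:]^2" g] by (simp add: degree_linear_power)

lemma pev_lin_minus: "pev h [:-z, 1:] = h - sc z 1"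
  by (simp add: pev_lin sc_minus_left)

lemma spectral:
  assumes D: "star_subalg sc st C" "fin_dim_C sc C" and h: "h \<in> C" "st h = h"
  shows "\<exists>L P. pfam L P \<and> h = (\<Sum>l\<in>L. l *\<^sub>R P l) \<and>
     (\<forall>E. star_subalg sc st E \<and> h \<in> E \<longrightarrow> (\<forall>l\<in>L. P l \<in> E))"
proof -
  define S where "S = {f. f \<noteq> 0 \<and> pev h f = 0}"
  obtain f0 where "f0 \<in> S" using annih[OF D h(1)] S_def by blast
  then obtain m where m: "m \<in> S" "\<And>g. g \<in> S \<Longrightarrow> degree m \<le> degree g"
    using ex_has_least_nat[of "\<lambda>f. f \<in> S" f0 degree] by blast
  have m0: "m \<noteq> 0" and pm: "pev h m = 0" using m(1) S_def by auto
  have mini: "pev h g \<noteq> 0" if "g \<noteq> 0" "degree g < degree m" for g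
    using m(2)[of g] that S_def by force
  define R where "R = {z. poly m z = 0}"
  have finR: "finite R" unfolding R_def using poly_roots_finite[OF m0] .
  have factor: "\<exists>g. m = [:-z,1:] * g \<and> g \<noteq> 0 \<and> degree g < degree m" if "z \<in> R" for z
  proof -
    from that have "[:-z,1:] dvd m" unfolding R_def by (simp add: poly_eq_0_iff_dvd)
    then obtain g where g: "m = [:-z,1:] * g" by (auto elim: dvdE)
    with m0 have "g \<noteq> 0" by auto
    moreover have "degree m = Suc (degree g)" using g \<open>g \<noteq> 0\<close> degree_lin_mult by metis
    ultimately show ?thesis using g by auto
  qed
  have real: "cnj z = z" if zR: "z \<in> R" for z
  proof -
    obtain g where g: "m = [:-z,1:] * g" "g \<noteq> 0" "degree g < degree m" using factor[OF zR] by blast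
    define y where "y = pev h g"
    have y0: "y \<noteq> 0" using mini[OF g(2,3)] y_def by simp
    have "(h - sc z 1) * y = 0" using pm g(1) by (simp del: mult_pCons_left add: pev_mult pev_lin_minus y_def)
    hence "h * y - sc z y = 0" by (simp only: left_diff_distrib sc_mult_left mult_1_left)
    hence hy: "h * y = sc z y" by simp
    have e1: "st y * (h * y) = sc z (st y * y)" by (simp add: hy sc_mult_right)
    have e2: "st y * (h * y) = st (h * y) * y"
      by (simp add: st_mult h(2) mult.assoc)
    have e3: "st (h * y) * y = sc (cnj z) (st y * y)" by (simp add: hy st_sc sc_mult_left)
    have "sc (z - cnj z) (st y * y) = 0" by (simp only: sc_diff_left e1[symmetric] e2 e3) simp
    then have "z - cnj z = 0 \<or> st y * y = 0" by (rule sc_eq_0)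
    moreover have "st y * y \<noteq> 0" using st_zero_iff y0 by blast
    ultimately show ?thesis by simp
  qed
  have ord1: "order z m = 1" if "z \<in> R" for z
  proof -
    have "order z m \<noteq> 0" using that m0 unfolding R_def by (simp add: order_root)
    moreover have "\<not> [:-z,1:]^2 dvd m"
    proof
      assume "[:-z,1:]^2 dvd m"
      then obtain g where g: "m = [:-z,1:]^2 * g" by (auto elim: dvdE)
      with m0 have g0: "g \<noteq> 0" by auto
      define k where "k = h - sc z 1"
      have kst: "st k = k" unfolding k_def using real[OF that] by (simp add: st_diff st_sc h(2))
      define y where "y = pev h g"
      have "pev h m = pev h ([:-z,1:]^2) * pev h g" using g pev_mult by metis
      moreover have "pev h ([:-z,1:]^2) = k * k" unfolding power2_eq_square pev_mult pev_lin_minus k_def ..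
      ultimately have "k * k * y = 0" using pm y_def by simp
      hence "st (k * y) * (k * y) = 0" by (simp add: st_mult kst mult.assoc)
      hence "k * y = 0" by (rule st_zero_iff)
      hence "pev h ([:-z,1:] * g) = 0" by (simp del: mult_pCons_left add: pev_mult pev_lin_minus y_def k_def)
      moreover have "[:-z,1:] * g \<noteq> 0" using g0 by (simp del: mult_pCons_left)
      moreover have "degree ([:-z,1:] * g) < degree m" using g g0 degree_lin_mult degree_lin2_mult by (metis lessI)
      ultimately show False using mini by blast
    qed
    moreover have "[:-z,1:] ^ order z m dvd m" by (rule order_1)
    ultimately show ?thesis
      by (metis One_nat_def Suc_1 dvd_trans le_imp_power_dvd less_2_cases_iff not_le)
  qed
  define q where "q = (\<Prod>z\<in>R. [:-z,1:])"
  have mq: "m = smult (lead_coeff m) q"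
  proof -
    have "m = smult (lead_coeff m) (\<Prod>z\<in>R. [:-z, 1:] ^ order z m)"
      using complex_poly_decompose[of m] unfolding R_def by simp
    also have "(\<Prod>z\<in>R. [:-z, 1:] ^ order z m) = q" unfolding q_def by (rule prod.cong) (auto simp: ord1)
    finally show ?thesis .
  qed
  have pq: "pev h q = 0"
  proof -
    have "sc (lead_coeff m) (pev h q) = 0" using pm mq by (metis pev_smult)
    thus ?thesis using m0 sc_eq_0 by auto
  qed
  have degq: "degree q = card R" unfolding q_def
    by (subst degree_prod_eq_sum_degree) auto
  have degm: "degree m = card R" using mq degq m0 by (metis degree_smult_eq smult_eq_0_iff)
  have cardR: "card R \<ge> 1"
  proof (rule ccontr)
    assume "\<not> card R \<ge> 1"
    then have "degree m = 0" using degm by simp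
    then obtain c where "m = [:c:]" by (rule degree_eq_zeroE)
    hence "sc c 1 = 0" "c \<noteq> 0" using pm m0 by (auto simp: pev_const)
    thus False using sc_eq_0 by auto
  qed
  define Q where "Q r = (\<Prod>s\<in>R-{r}. [:-s,1:])" for r
  define cc where "cc r = (\<Prod>s\<in>R-{r}. r - s)" for r
  define Lp where "Lp r = smult (1 / cc r) (Q r)" for r
  have polyQ: "poly (Q r) t = (\<Prod>s\<in>R-{r}. t - s)" for r t unfolding Q_def by (simp add: poly_prod)
  have cc0: "cc r \<noteq> 0" if "r \<in> R" for r unfolding cc_def using finR by auto
  have polyL: "poly (Lp r) t = (if t = r then 1 else 0)" if "r \<in> R" "t \<in> R" for r t
  proof (cases "t = r")
    case True thus ?thesis using cc0[OF that(1)] by (simp add: Lp_def polyQ cc_def)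
  next
    case False
    hence "(\<Prod>s\<in>R-{r}. t - s) = 0" using that finR by (intro prod_zero) auto
    thus ?thesis using False by (simp add: Lp_def polyQ)
  qed
  have degQ: "degree (Q r) = card R - 1" if "r \<in> R" for r
    unfolding Q_def using that finR by (subst degree_prod_eq_sum_degree) auto
  have degL: "degree (Lp r) < degree m" if "r \<in> R" for r
    using degQ[OF that] cardR degm by (simp add: Lp_def)
  have L0: "Lp r \<noteq> 0" if "r \<in> R" for r using polyL[OF that that] by auto
  have sumL: "(\<Sum>r\<in>R. Lp r) = 1"
  proof -
    have "(\<Sum>r\<in>R. Lp r) - 1 = 0"
    proof (rule poly_many_roots_zero[OF finR])
      have "degree (\<Sum>r\<in>R. Lp r) \<le> card R - 1"
      proof (rule degree_sum_le[OF finR])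
        fix p assume "p \<in> R"
        from degL[OF this] degm show "degree (Lp p) \<le> card R - 1" by linarith
      qed
      hence "degree ((\<Sum>r\<in>R. Lp r) - 1) \<le> card R - 1"
        using degree_diff_le[of "(\<Sum>r\<in>R. Lp r)" "card R - 1" 1] by simp
      thus "degree ((\<Sum>r\<in>R. Lp r) - 1) < card R" using cardR by simp
    next
      fix t assume t: "t \<in> R"
      have "poly (\<Sum>r\<in>R. Lp r) t = (\<Sum>r\<in>R. if t = r then 1 else 0)"
        by (simp add: poly_sum polyL[OF _ t])
      also have "\<dots> = 1" using t finR by simp
      finally show "poly ((\<Sum>r\<in>R. Lp r) - 1) t = 0" by simp
    qed
    thus ?thesis by simp
  qed
  define P' where "P' r = pev h (Lp r)" for r
  have P'0: "P' r \<noteq> 0" if "r \<in> R" for r unfolding P'_def using mini[OF L0[OF that] degL[OF that]] .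
  have sumP': "(\<Sum>r\<in>R. P' r) = 1" unfolding P'_def using sumL by (metis pev_one pev_sum)
  have orth: "P' r * P' s = 0" if "r \<in> R" "s \<in> R" "r \<noteq> s" for r s
  proof -
    have Qr: "Q r = [:-s,1:] * (\<Prod>t\<in>R-{r}-{s}. [:-t,1:])"
      unfolding Q_def using that finR by (subst prod.remove[of _ s]) auto
    have qs: "q = [:-s,1:] * Q s" unfolding q_def Q_def using that finR by (subst prod.remove[of _ s]) auto
    have QQ: "Q r * Q s = q * (\<Prod>t\<in>R-{r}-{s}. [:-t,1:])" unfolding Qr qs by (simp only: mult_ac)
    have "Lp r * Lp s = smult (1 / cc r * (1 / cc s)) (Q r * Q s)"
      by (simp add: Lp_def mult.commute)
    hence "Lp r * Lp s = smult (1 / cc r * (1 / cc s)) (q * (\<Prod>t\<in>R-{r}-{s}. [:-t,1:]))"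
      by (simp only: QQ)
    hence "pev h (Lp r * Lp s) = 0" by (simp only: pev_mult pev_smult pq mult_zero_left sc_zero_right)
    thus ?thesis unfolding P'_def by (simp only: pev_mult)
  qed
  have idem: "P' r * P' r = P' r" if "r \<in> R" for r
  proof -
    have "P' r = P' r * (\<Sum>s\<in>R. P' s)" using sumP' by simp
    also have "\<dots> = (\<Sum>s\<in>R. P' r * P' s)" by (simp add: sum_distrib_left)
    also have "\<dots> = P' r * P' r"
      using that finR by (subst sum.remove[of _ r]) (auto intro!: sum.neutral orth)
    finally show ?thesis by simp
  qed
  have eig: "h * P' r = Re r *\<^sub>R P' r" if "r \<in> R" for r
  proof -
    have qr: "q = [:-r,1:] * Q r" unfolding q_def Q_def using that finR by (subst prod.remove[of _ r]) auto
    have "[:-r,1:] * Lp r = smult (1 / cc r) q" by (simp add: Lp_def qr)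
    hence "pev h ([:-r,1:] * Lp r) = 0" by (simp only: pev_smult pq sc_zero_right)
    hence "(h - sc r 1) * P' r = 0" unfolding P'_def by (simp only: pev_mult pev_lin_minus)
    hence "h * P' r - sc r (P' r) = 0" by (simp only: left_diff_distrib sc_mult_left mult_1_left)
    hence "h * P' r = sc r (P' r)" by simp
    moreover have "r = of_real (Re r)" using real[OF that] by (metis complex_is_Real_iff Reals_cnj_iff of_real_Re)
    ultimately show ?thesis by (metis sc_real)
  qed
  have sa: "st (P' r) = P' r" if "r \<in> R" for r
  proof -
    have "map_poly cnj (Lp r) - Lp r = 0"
    proof (rule poly_many_roots_zero[OF finR])
      have "degree (map_poly cnj (Lp r)) = degree (Lp r)" by (simp add: degree_map_poly)
      thus "degree (map_poly cnj (Lp r) - Lp r) < card R"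
        using degL[OF that] degm degree_diff_le[of "map_poly cnj (Lp r)" "degree (Lp r)" "Lp r"] by simp
    next
      fix t assume t: "t \<in> R"
      have "poly (map_poly cnj (Lp r)) t = cnj (poly (Lp r) (cnj t))"
        using poly_cnj[of "Lp r" "cnj t"] by simp
      also have "\<dots> = poly (Lp r) t" using real[OF t] polyL[OF that t] by simp
      finally show "poly (map_poly cnj (Lp r) - Lp r) t = 0" by simp
    qed
    hence "map_poly cnj (Lp r) = Lp r" by simp
    thus ?thesis unfolding P'_def using pev_st[OF h(2)] by metis
  qed
  define L where "L = Re ` R"
  define P where "P l = P' (of_real l)" for l
  have injR: "inj_on Re R"
    by (rule inj_onI) (metis complex_is_Real_iff Reals_cnj_iff of_real_Re real)
  have RL: "of_real (Re r) = r" if "r \<in> R" for r using real[OF that] by (metis complex_is_Real_iff Reals_cnj_iff of_real_Re)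
  have sumre: "(\<Sum>l\<in>L. g l) = (\<Sum>r\<in>R. g (Re r))" for g :: "real \<Rightarrow> 'a"
    unfolding L_def using sum.reindex[OF injR, of g] by simp
  have "pfam L P"
    unfolding pfam_def
  proof (intro conjI ballI impI)
    show "finite L" unfolding L_def using finR by simp
    show "sum P L = 1" unfolding sumre P_def using RL sumP' by (metis (no_types, lifting) sum.cong)
  next
    fix l assume "l \<in> L"
    then obtain r where r: "r \<in> R" "l = Re r" unfolding L_def by auto
    show "st (P l) = P l" "P l * P l = P l" "P l \<noteq> 0" unfolding P_def r(2) RL[OF r(1)]
      using sa idem P'0 r(1) by auto
  next
    fix l l' assume "l \<in> L" "l' \<in> L" "l \<noteq> l'"
    then obtain r r' where r: "r \<in> R" "l = Re r" "r' \<in> R" "l' = Re r'" unfolding L_def by auto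
    show "P l * P l' = 0" unfolding P_def r(2,4) RL[OF r(1)] RL[OF r(3)]
      using orth r \<open>l \<noteq> l'\<close> by auto
  qed
  moreover have "h = (\<Sum>l\<in>L. l *\<^sub>R P l)"
  proof -
    have "h = h * (\<Sum>r\<in>R. P' r)" using sumP' by simp
    also have "\<dots> = (\<Sum>r\<in>R. Re r *\<^sub>R P' r)" by (simp add: sum_distrib_left eig cong: sum.cong)
    also have "\<dots> = (\<Sum>l\<in>L. l *\<^sub>R P l)" unfolding sumre P_def using RL by simp
    finally show ?thesis .
  qed
  moreover have "\<forall>E. star_subalg sc st E \<and> h \<in> E \<longrightarrow> (\<forall>l\<in>L. P l \<in> E)"
    unfolding P_def P'_def using pev_in by blast
  ultimately show ?thesis by blast
qed

lemma pfam_projmult: assumes "pfam L P" "m \<in> L"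
  shows "(\<Sum>l\<in>L. a l *\<^sub>R P l) * P m = a m *\<^sub>R P m"
proof -
  have fin: "finite L" using assms(1) unfolding pfam_def by blast
  have "(\<Sum>l\<in>L. a l *\<^sub>R P l) * P m = (\<Sum>l\<in>L. a l *\<^sub>R (P l * P m))"
    by (simp add: sum_distrib_right)
  also have "\<dots> = a m *\<^sub>R (P m * P m)"
    using assms fin by (subst sum.remove[of _ m]) (auto simp: pfam_def intro!: sum.neutral)
  also have "\<dots> = a m *\<^sub>R P m" using assms unfolding pfam_def by simp
  finally show ?thesis .
qed

lemma pfam_mult: assumes "pfam L P"
  shows "(\<Sum>l\<in>L. a l *\<^sub>R P l) * (\<Sum>l\<in>L. b l *\<^sub>R P l) = (\<Sum>l\<in>L. (a l * b l) *\<^sub>R P l)"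
proof -
  have "(\<Sum>l\<in>L. a l *\<^sub>R P l) * (\<Sum>l\<in>L. b l *\<^sub>R P l) = (\<Sum>m\<in>L. b m *\<^sub>R ((\<Sum>l\<in>L. a l *\<^sub>R P l) * P m))"
    by (simp add: sum_distrib_left)
  also have "\<dots> = (\<Sum>m\<in>L. (a m * b m) *\<^sub>R P m)"
    by (rule sum.cong) (simp_all add: pfam_projmult[OF assms] mult.commute)
  finally show ?thesis .
qed

lemma pfam_one: assumes "pfam L P" shows "(\<Sum>l\<in>L. 1 *\<^sub>R P l) = 1"
  using assms unfolding pfam_def by simp

lemma pfam_const: assumes "pfam L P" shows "t *\<^sub>R 1 = (\<Sum>l\<in>L. t *\<^sub>R P l)"
  using assms unfolding pfam_def by (simp add: scaleR_sum_right[symmetric])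

lemma pfam_sa: assumes "pfam L P" shows "st (\<Sum>l\<in>L. a l *\<^sub>R P l) = (\<Sum>l\<in>L. a l *\<^sub>R P l)"
  using assms unfolding pfam_def by (simp add: st_sum st_scaleR)

lemma pfam_power: assumes "pfam L P"
  shows "(\<Sum>l\<in>L. a l *\<^sub>R P l) ^ n = (\<Sum>l\<in>L. (a l ^ n) *\<^sub>R P l)"
proof (induction n)
  case 0 thus ?case using pfam_one[OF assms] by simp
next
  case (Suc n) thus ?case by (simp add: pfam_mult[OF assms])
qed

lemma pfam_ne: assumes "pfam L P" shows "L \<noteq> {}"
  using assms unfolding pfam_def by auto

lemma pfam_norm_low: assumes "pfam L P" "m \<in> L"
  shows "\<bar>a m\<bar> \<le> norm (\<Sum>l\<in>L. a l *\<^sub>R P l)"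
proof -
  have n1: "norm (P m) = 1" using assms proj_norm1 unfolding pfam_def by blast
  have "\<bar>a m\<bar> = norm (a m *\<^sub>R P m)" using n1 by simp
  also have "\<dots> = norm ((\<Sum>l\<in>L. a l *\<^sub>R P l) * P m)" by (simp add: pfam_projmult[OF assms])
  also have "\<dots> \<le> norm (\<Sum>l\<in>L. a l *\<^sub>R P l) * norm (P m)" by (rule norm_mult_ineq)
  finally show ?thesis using n1 by simp
qed

lemma sa_power_norm: assumes "st x = x" shows "norm (x ^ (2 ^ k)) = norm x ^ (2 ^ k)"
proof (induction k)
  case (Suc k)
  have "x ^ (2 ^ Suc k) = x ^ (2 ^ k) * x ^ (2 ^ k)" by (simp add: power_add[symmetric] mult_2)
  hence "norm (x ^ (2 ^ Suc k)) = norm (x ^ (2 ^ k)) ^ 2"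
    using cstar_sa[of "x ^ (2 ^ k)"] st_power_sa[OF assms] by simp
  thus ?case using Suc by (simp add: power_mult[symmetric] mult.commute)
qed simp

lemma pfam_norm_up: assumes "pfam L P" "\<And>l. l \<in> L \<Longrightarrow> \<bar>a l\<bar> \<le> M"
  shows "norm (\<Sum>l\<in>L. a l *\<^sub>R P l) \<le> M"
proof (rule ccontr)
  define x where "x = (\<Sum>l\<in>L. a l *\<^sub>R P l)"
  assume "\<not> norm (\<Sum>l\<in>L. a l *\<^sub>R P l) \<le> M"
  hence big: "norm x > M" unfolding x_def by simp
  have fin: "finite L" using assms(1) unfolding pfam_def by blast
  obtain l0 where "l0 \<in> L" using pfam_ne[OF assms(1)] by blast
  hence M0: "M \<ge> 0" using assms(2) by force
  have bound: "norm x ^ (2 ^ k) \<le> real (card L) * M ^ (2 ^ k)" for k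
  proof -
    have "norm x ^ (2 ^ k) = norm (x ^ (2 ^ k))"
      using sa_power_norm[of x k] pfam_sa[OF assms(1)] unfolding x_def by simp
    also have "\<dots> = norm (\<Sum>l\<in>L. (a l ^ (2 ^ k)) *\<^sub>R P l)" unfolding x_def pfam_power[OF assms(1)] ..
    also have "\<dots> \<le> (\<Sum>l\<in>L. norm ((a l ^ (2 ^ k)) *\<^sub>R P l))" by (rule norm_sum)
    also have "\<dots> \<le> (\<Sum>l\<in>L. M ^ (2 ^ k))"
    proof (rule sum_mono)
      fix l assume l: "l \<in> L"
      have "norm (P l) \<le> 1" using assms(1) l proj_norm_le unfolding pfam_def by blast
      moreover have "\<bar>a l\<bar> ^ (2 ^ k) \<le> M ^ (2 ^ k)" using assms(2)[OF l] by (simp add: power_mono)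
      ultimately show "norm ((a l ^ (2 ^ k)) *\<^sub>R P l) \<le> M ^ (2 ^ k)"
        by (simp add: power_abs) (metis mult_left_le mult_le_one norm_ge_zero order_trans zero_le_power_abs  mult_mono order_refl)
    qed
    also have "\<dots> = real (card L) * M ^ (2 ^ k)" by simp
    finally show ?thesis .
  qed
  show False
  proof (cases "M = 0")
    case True
    have "norm x ^ (2 ^ 0) \<le> 0" using bound[of 0] True by simp
    thus False using big True by simp
  next
    case False
    hence Mp: "M > 0" using M0 by simp
    define \<rho> where "\<rho> = norm x / M"
    have r1: "\<rho> > 1" using big Mp unfolding \<rho>_def by simp
    obtain n where n: "real (card L) < \<rho> ^ n" using real_arch_pow[OF r1] by blast
    have "\<rho> ^ n \<le> \<rho> ^ (2 ^ n)" using r1 by (intro power_increasing) (auto intro: less_imp_le)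
    also have "\<rho> ^ (2 ^ n) = norm x ^ (2 ^ n) / M ^ (2 ^ n)" unfolding \<rho>_def by (simp add: power_divide)
    also have "\<dots> \<le> real (card L)" using bound[of n] Mp by (simp add: divide_le_eq)
    finally show False using n by simp
  qed
qed

definition posn :: "'a \<Rightarrow> bool" where
  "posn a \<longleftrightarrow> st a = a \<and> norm (norm a *\<^sub>R 1 - a) \<le> norm a"

definition fdalg :: "'a set \<Rightarrow> bool" where
  "fdalg C \<longleftrightarrow> star_subalg sc st C \<and> fin_dim_C sc C"

lemma pos_eig: assumes "pfam L P" "t \<ge> 0" "norm (t *\<^sub>R 1 - (\<Sum>l\<in>L. \<nu> l *\<^sub>R P l)) \<le> t" "m \<in> L"
  shows "\<nu> m \<ge> 0"
proof -
  have "t *\<^sub>R 1 - (\<Sum>l\<in>L. \<nu> l *\<^sub>R P l) = (\<Sum>l\<in>L. (t - \<nu> l) *\<^sub>R P l)"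
    by (simp add: pfam_const[OF assms(1)] scaleR_diff_left sum_subtractf)
  hence "\<bar>t - \<nu> m\<bar> \<le> t" using pfam_norm_low[OF assms(1,4), of "\<lambda>l. t - \<nu> l"] assms(3) by simp
  thus ?thesis by simp
qed

lemma eig_pos: assumes "pfam L P" "\<And>l. l \<in> L \<Longrightarrow> \<nu> l \<ge> 0" "t \<ge> norm (\<Sum>l\<in>L. \<nu> l *\<^sub>R P l)"
  shows "norm (t *\<^sub>R 1 - (\<Sum>l\<in>L. \<nu> l *\<^sub>R P l)) \<le> t"
proof -
  have "t *\<^sub>R 1 - (\<Sum>l\<in>L. \<nu> l *\<^sub>R P l) = (\<Sum>l\<in>L. (t - \<nu> l) *\<^sub>R P l)"
    by (simp add: pfam_const[OF assms(1)] scaleR_diff_left sum_subtractf)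
  moreover have "\<bar>t - \<nu> l\<bar> \<le> t" if "l \<in> L" for l
  proof -
    have "\<bar>\<nu> l\<bar> \<le> norm (\<Sum>l\<in>L. \<nu> l *\<^sub>R P l)" by (rule pfam_norm_low[OF assms(1) that])
    thus ?thesis using assms(2)[OF that] assms(3) by simp
  qed
  ultimately show ?thesis using pfam_norm_up[OF assms(1)] by simp
qed

lemma pos_sum: assumes C: "fdalg C" and ab: "a \<in> C" "b \<in> C" "posn a" "posn b"
  shows "posn (a + b)"
proof -
  have sa: "st (a + b) = a + b" using ab unfolding posn_def by (simp add: st_add)
  have inC: "a + b \<in> C" using C ab unfolding fdalg_def star_subalg_def by blast
  obtain L P where LP: "pfam L P" "a + b = (\<Sum>l\<in>L. l *\<^sub>R P l)"
    using spectral[of C "a + b"] C inC sa unfolding fdalg_def by blast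
  define t where "t = norm a + norm b"
  have "norm (t *\<^sub>R 1 - (a + b)) = norm ((norm a *\<^sub>R 1 - a) + (norm b *\<^sub>R 1 - b))"
    unfolding t_def by (simp add: algebra_simps scaleR_add_left)
  also have "\<dots> \<le> norm (norm a *\<^sub>R 1 - a) + norm (norm b *\<^sub>R 1 - b)" by (rule norm_triangle_ineq)
  also have "\<dots> \<le> t" using ab unfolding posn_def t_def by simp
  finally have "norm (t *\<^sub>R 1 - (\<Sum>l\<in>L. l *\<^sub>R P l)) \<le> t" using LP by simp
  hence "\<And>m. m \<in> L \<Longrightarrow> m \<ge> 0" using pos_eig[OF LP(1), of t "\<lambda>l. l"] unfolding t_def by simp
  hence "norm (norm (a + b) *\<^sub>R 1 - (\<Sum>l\<in>L. l *\<^sub>R P l)) \<le> norm (a + b)"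
    using eig_pos[OF LP(1), of "\<lambda>l. l" "norm (a + b)"] LP(2) by simp
  thus ?thesis unfolding posn_def using sa LP(2) by simp
qed

lemma pos_sq: assumes C: "fdalg C" and h: "h \<in> C" "st h = h" shows "posn (h * h)"
proof -
  obtain L P where LP: "pfam L P" "h = (\<Sum>l\<in>L. l *\<^sub>R P l)"
    using spectral[of C h] C h unfolding fdalg_def by blast
  have hh: "h * h = (\<Sum>l\<in>L. (l * l) *\<^sub>R P l)" using LP pfam_mult[OF LP(1)] by simp
  have "norm (norm (h * h) *\<^sub>R 1 - (\<Sum>l\<in>L. (l * l) *\<^sub>R P l)) \<le> norm (h * h)"
    using eig_pos[OF LP(1), of "\<lambda>l. l * l" "norm (h * h)"] hh by simp
  moreover have "st (h * h) = h * h" using h by (simp add: st_mult)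
  ultimately show ?thesis unfolding posn_def hh by simp
qed

lemma pos_scale: assumes "posn a" "r \<ge> 0" shows "posn (r *\<^sub>R a)"
proof -
  have "norm (r *\<^sub>R a) *\<^sub>R 1 - r *\<^sub>R a = r *\<^sub>R (norm a *\<^sub>R 1 - a)"
    using assms(2) by (simp add: scaleR_diff_right)
  hence "norm (norm (r *\<^sub>R a) *\<^sub>R 1 - r *\<^sub>R a) = r * norm (norm a *\<^sub>R 1 - a)"
    using assms(2) by simp
  also have "\<dots> \<le> r * norm a" using assms unfolding posn_def by (simp add: mult_left_mono)
  finally show ?thesis using assms unfolding posn_def by (simp add: st_scaleR)
qed

lemma pos_proj: assumes "st q = q" "q * q = q" shows "posn q"
proof (cases "q = 0")
  case True thus ?thesis unfolding posn_def by simp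
next
  case False
  hence n1: "norm q = 1" using proj_norm1[OF assms] by simp
  have "st (1 - q) = 1 - q" "(1 - q) * (1 - q) = 1 - q" using assms by (simp_all add: st_diff algebra_simps)
  hence "norm (1 - q) \<le> 1" by (rule proj_norm_le)
  thus ?thesis unfolding posn_def using n1 assms by simp
qed

lemma neg_proj: assumes "st s = s" "s * s = s" "posn (- s)" shows "s = 0"
proof (rule ccontr)
  assume "s \<noteq> 0"
  hence n1: "norm s = 1" using proj_norm1[OF assms(1,2)] by simp
  have le1: "norm (1 + s) \<le> 1" using assms(3) n1 unfolding posn_def by simp
  have "(1 + s) * s = 2 *\<^sub>R s" using assms(2) by (simp add: algebra_simps scaleR_2)
  hence "2 = norm ((1 + s) * s)" using n1 by simp
  also have "\<dots> \<le> norm (1 + s) * norm s" by (rule norm_mult_ineq)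
  finally show False using le1 n1 by simp
qed

lemma fdalg_mult: "fdalg C \<Longrightarrow> a \<in> C \<Longrightarrow> b \<in> C \<Longrightarrow> a * b \<in> C"
  and fdalg_add: "fdalg C \<Longrightarrow> a \<in> C \<Longrightarrow> b \<in> C \<Longrightarrow> a + b \<in> C"
  and fdalg_st: "fdalg C \<Longrightarrow> a \<in> C \<Longrightarrow> st a \<in> C"
  and fdalg_sc: "fdalg C \<Longrightarrow> a \<in> C \<Longrightarrow> sc c a \<in> C"
  unfolding fdalg_def star_subalg_def by blast+

lemma fdalg_scaleR: "fdalg C \<Longrightarrow> a \<in> C \<Longrightarrow> r *\<^sub>R a \<in> C"
  using fdalg_sc[of C a "complex_of_real r"] by (simp add: sc_real)

lemma fdalg_diff: "fdalg C \<Longrightarrow> a \<in> C \<Longrightarrow> b \<in> C \<Longrightarrow> a - b \<in> C"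
  using fdalg_add[of C a "(-1) *\<^sub>R b"] fdalg_scaleR[of C b "-1"] by simp

lemma fdalg_sum: "fdalg C \<Longrightarrow> (\<And>x. x \<in> A \<Longrightarrow> f x \<in> C) \<Longrightarrow> sum f A \<in> C"
  using subalg_sum unfolding fdalg_def by blast

lemma pos_starmult: assumes C: "fdalg C" and b: "b \<in> C" shows "posn (st b * b)"
proof -
  define a where "a = st b * b"
  have aC: "a \<in> C" unfolding a_def using C b fdalg_mult fdalg_st by blast
  have asa: "st a = a" unfolding a_def by (simp add: st_mult)
  obtain L P where LP: "pfam L P" "a = (\<Sum>l\<in>L. l *\<^sub>R P l)"
      and PE: "\<forall>E. star_subalg sc st E \<and> a \<in> E \<longrightarrow> (\<forall>l\<in>L. P l \<in> E)"
    using spectral[of C a] C aC asa unfolding fdalg_def by blast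
  have PC: "P l \<in> C" if "l \<in> L" for l using PE C aC that unfolding fdalg_def by blast
  have nonneg: "l \<ge> 0" if lL: "l \<in> L" for l
  proof (rule ccontr)
    assume "\<not> l \<ge> 0"
    hence lneg: "l < 0" by simp
    define fq where "fq m = (if m < 0 then 1 else 0::real)" for m :: real
    define fr where "fr m = (if m < 0 then 1 / sqrt (- m) else 0::real)" for m :: real
    define Q where "Q = (\<Sum>m\<in>L. fq m *\<^sub>R P m)"
    define r where "r = (\<Sum>m\<in>L. fr m *\<^sub>R P m)"
    have QC: "Q \<in> C" unfolding Q_def using PC by (intro fdalg_sum[OF C] fdalg_scaleR[OF C]) auto
    have rC: "r \<in> C" unfolding r_def using PC by (intro fdalg_sum[OF C] fdalg_scaleR[OF C]) auto
    have Qsa: "st Q = Q" unfolding Q_def by (rule pfam_sa[OF LP(1)])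
    have rsa: "st r = r" unfolding r_def by (rule pfam_sa[OF LP(1)])
    have Q0: "Q \<noteq> 0"
    proof
      assume "Q = 0"
      hence "\<bar>fq l\<bar> \<le> 0" using pfam_norm_low[OF LP(1) lL, of fq] unfolding Q_def by simp
      thus False using lneg unfolding fq_def by simp
    qed
    have rar: "r * a * r = - Q"
    proof -
      have "r * a * r = (\<Sum>m\<in>L. (fr m * m * fr m) *\<^sub>R P m)"
        unfolding r_def LP(2) by (simp add: pfam_mult[OF LP(1)])
      also have "\<dots> = (\<Sum>m\<in>L. (- fq m) *\<^sub>R P m)"
      proof (rule sum.cong)
        fix m assume "m \<in> L"
        have "fr m * m * fr m = - fq m"
        proof (cases "m < 0")
          case True
          hence "sqrt (- m) * sqrt (- m) = - m" by simp
          thus ?thesis using True unfolding fr_def fq_def by (simp add: field_simps)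
        qed (simp add: fr_def fq_def)
        thus "(fr m * m * fr m) *\<^sub>R P m = (- fq m) *\<^sub>R P m" by simp
      qed simp
      also have "\<dots> = - Q" unfolding Q_def by (simp add: sum_negf)
      finally show ?thesis .
    qed
    have rQ: "r * Q = r"
    proof -
      have "r * Q = (\<Sum>m\<in>L. (fr m * fq m) *\<^sub>R P m)" unfolding r_def Q_def by (simp add: pfam_mult[OF LP(1)])
      also have "\<dots> = r" unfolding r_def by (rule sum.cong) (auto simp: fr_def fq_def)
      finally show ?thesis .
    qed
    define c where "c = b * r"
    have cC: "c \<in> C" unfolding c_def using fdalg_mult[OF C b rC] .
    have ctc: "st c * c = - Q" unfolding c_def using rar by (simp add: st_mult rsa a_def mult.assoc)
    have cQ: "c * Q = c" unfolding c_def using rQ by (simp add: mult.assoc)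
    define d where "d = st c"
    define s where "s = - (c * d)"
    have ssa: "st s = s" unfolding s_def d_def by (simp add: st_minus st_mult)
    have sidem: "s * s = s"
    proof -
      have "s * s = c * (d * c) * d" unfolding s_def by (simp add: mult.assoc)
      also have "\<dots> = - (c * Q * d)" using ctc unfolding d_def by simp
      also have "\<dots> = s" using cQ unfolding s_def by simp
      finally show ?thesis .
    qed
    define h1 where "h1 = c + d"
    define h2 where "h2 = sc \<i> (c - d)"
    have h1C: "h1 \<in> C" unfolding h1_def d_def using cC C fdalg_add fdalg_st by blast
    have h2C: "h2 \<in> C" unfolding h2_def d_def using cC C fdalg_diff fdalg_st fdalg_sc by blast
    have h1sa: "st h1 = h1" unfolding h1_def d_def by (simp add: st_add add.commute)
    have h2sa: "st h2 = h2" unfolding h2_def d_def by (simp add: st_sc st_diff sc_diff_right sc_minus_left)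
    have h2sq: "h2 * h2 = - ((c - d) * (c - d))"
      unfolding h2_def by (simp add: sc_mult_left sc_mult_right sc_sc sc_minus_left)
    have "h1 * h1 + h2 * h2 = 2 *\<^sub>R (c * d + d * c)"
      unfolding h2sq h1_def by (simp add: algebra_simps scaleR_2)
    hence "(1/2) *\<^sub>R (h1 * h1 + h2 * h2) = c * d + d * c" by simp
    hence "c * d = (1/2) *\<^sub>R (h1 * h1 + h2 * h2) - d * c" by (simp add: algebra_simps)
    hence cd: "c * d = (1/2) *\<^sub>R (h1 * h1) + (1/2) *\<^sub>R (h2 * h2) + Q"
      using ctc unfolding d_def by (simp add: scaleR_add_right)
    have p1: "posn ((1/2) *\<^sub>R (h1 * h1))" by (rule pos_scale[OF pos_sq[OF C h1C h1sa]]) simp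
    have p2: "posn ((1/2) *\<^sub>R (h2 * h2))" by (rule pos_scale[OF pos_sq[OF C h2C h2sa]]) simp
    have p3: "posn Q"
    proof (rule pos_proj[OF Qsa])
      show "Q * Q = Q" unfolding Q_def pfam_mult[OF LP(1)] by (rule sum.cong) (auto simp: fq_def)
    qed
    have m1: "(1/2) *\<^sub>R (h1 * h1) \<in> C" using h1C C fdalg_mult fdalg_scaleR by blast
    have m2: "(1/2) *\<^sub>R (h2 * h2) \<in> C" using h2C C fdalg_mult fdalg_scaleR by blast
    have "posn (c * d)" unfolding cd
      by (intro pos_sum[OF C] fdalg_add[OF C] m1 m2 QC p1 p2 p3)
    hence "posn (- s)" unfolding s_def by simp
    hence "s = 0" using neg_proj ssa sidem by blast
    hence "st d * d = 0" unfolding s_def d_def by simp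
    hence "d = 0" by (rule st_zero_iff)
    hence "c = 0" unfolding d_def by (metis st_st st_zero)
    hence "Q = 0" using ctc by simp
    thus False using Q0 by simp
  qed
  have "norm (norm a *\<^sub>R 1 - (\<Sum>l\<in>L. l *\<^sub>R P l)) \<le> norm a"
    using eig_pos[OF LP(1), of "\<lambda>l. l" "norm a"] nonneg LP(2) by simp
  thus ?thesis unfolding posn_def a_def[symmetric] using asa LP(2) by simp
qed

lemma posn_approx: assumes "\<And>\<delta>. \<delta> > 0 \<Longrightarrow> \<exists>b'. norm (b - b') < \<delta> \<and> posn (st b' * b')"
  shows "posn (st b * b)"
proof -
  define f where "f x = norm (norm x *\<^sub>R 1 - x) - norm x" for x :: 'a
  have fle: "f x \<le> f y + 3 * norm (x - y)" for x y
  proof -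
    have "norm x *\<^sub>R 1 - x = (norm y *\<^sub>R 1 - y) + ((norm x - norm y) *\<^sub>R 1 - (x - y))"
      by (simp add: algebra_simps)
    hence "norm (norm x *\<^sub>R 1 - x) \<le> norm (norm y *\<^sub>R 1 - y) + norm ((norm x - norm y) *\<^sub>R 1 - (x - y))"
      using norm_triangle_ineq[of "norm y *\<^sub>R 1 - y" "(norm x - norm y) *\<^sub>R 1 - (x - y)"] by (simp only:)
    also have "norm ((norm x - norm y) *\<^sub>R (1::'a) - (x - y)) \<le> \<bar>norm x - norm y\<bar> + norm (x - y)"
      using norm_triangle_ineq4[of "(norm x - norm y) *\<^sub>R (1::'a)" "x - y"] by simp
    also have "\<bar>norm x - norm y\<bar> \<le> norm (x - y)" by (rule norm_triangle_ineq3)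
    finally have "norm (norm x *\<^sub>R 1 - x) \<le> norm (norm y *\<^sub>R 1 - y) + 2 * norm (x - y)" by simp
    moreover have "norm y \<le> norm x + norm (x - y)" using norm_triangle_ineq2[of y x] norm_minus_commute[of x y] by simp
    ultimately show ?thesis unfolding f_def by simp
  qed
  define B where "B = 2 * norm b + 1"
  have B0: "B > 0" unfolding B_def by (simp add: add_nonneg_pos)
  have "f (st b * b) \<le> 0 + e" if e: "e > 0" for e
  proof -
    define \<delta> where "\<delta> = min 1 (e / (3 * B))"
    have d0: "\<delta> > 0" unfolding \<delta>_def using e B0 by simp
    obtain b' where b': "norm (b - b') < \<delta>" "posn (st b' * b')" using assms[OF d0] by blast
    have "f (st b' * b') \<le> 0" using b'(2) unfolding posn_def f_def by simp
    have "st b * b - st b' * b' = st b * (b - b') + st (b - b') * b'"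
      by (simp add: algebra_simps st_diff)
    hence "norm (st b * b - st b' * b') \<le> norm (st b * (b - b')) + norm (st (b - b') * b')"
      using norm_triangle_ineq[of "st b * (b - b')" "st (b - b') * b'"] by (simp only:)
    also have "\<dots> \<le> norm b * norm (b - b') + norm (b - b') * norm b'"
      using norm_mult_ineq[of "st b" "b - b'"] norm_mult_ineq[of "st (b - b')" "b'"] by simp
    also have "norm b' \<le> norm b + norm (b - b')" using norm_triangle_ineq2[of b' b] norm_minus_commute[of b b'] by simp
    hence "norm b * norm (b - b') + norm (b - b') * norm b' \<le> norm b * \<delta> + \<delta> * (norm b + \<delta>)"
      using b'(1) d0 by (intro add_mono mult_mono) auto
    also have "\<dots> \<le> \<delta> * B"
    proof -
      have "\<delta> \<le> 1" unfolding \<delta>_def by simp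
      hence "\<delta> * \<delta> \<le> \<delta>" using d0 by (simp add: mult_le_cancel_left1)
      thus ?thesis unfolding B_def by (simp add: algebra_simps)
    qed
    finally have "norm (st b * b - st b' * b') \<le> \<delta> * B" .
    hence "f (st b * b) \<le> 0 + 3 * (\<delta> * B)" using fle[of "st b * b" "st b' * b'"] \<open>f (st b' * b') \<le> 0\<close> by simp
    also have "3 * (\<delta> * B) \<le> e"
    proof -
      have "\<delta> \<le> e / (3 * B)" unfolding \<delta>_def by simp
      thus ?thesis using B0 by (simp add: field_simps)
    qed
    finally show ?thesis by simp
  qed
  hence "f (st b * b) \<le> 0" by (rule field_le_epsilon)
  thus ?thesis unfolding posn_def f_def by (simp add: st_mult)
qed

end

lemma interval_nbhd: assumes "interval I" shows "interval (nbhd T I)"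
proof -
  obtain a b where ab: "a \<le> b" "I = {a..b}" using assms unfolding interval_def by blast
  have "nbhd T I = {a - int T..b + int T}"
  proof (intro set_eqI iffI)
    fix k assume "k \<in> nbhd T I"
    thus "k \<in> {a - int T..b + int T}" unfolding nbhd_def ab by auto
  next
    fix k assume k: "k \<in> {a - int T..b + int T}"
    have "max a (min b k) \<in> I" "\<bar>k - max a (min b k)\<bar> \<le> int T" using k ab by auto
    thus "k \<in> nbhd T I" unfolding nbhd_def by blast
  qed
  thus ?thesis unfolding interval_def using ab by auto
qed

lemma interval_hull: assumes "interval I" "interval J" shows "\<exists>K. interval K \<and> I \<subseteq> K \<and> J \<subseteq> K"
proof -
  obtain a b where ab: "a \<le> b" "I = {a..b}" using assms unfolding interval_def by blast
  obtain c d where cd: "c \<le> d" "J = {c..d}" using assms unfolding interval_def by blast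
  have "interval {min a c..max b d}" unfolding interval_def using ab cd by (intro exI[of _ "min a c"] exI[of _ "max b d"]) auto
  moreover have "I \<subseteq> {min a c..max b d}" "J \<subseteq> {min a c..max b d}" using ab cd by auto
  ultimately show ?thesis by blast
qed

locale qlocal = cstar sc st for sc :: "complex \<Rightarrow> 'a::{real_normed_algebra_1,banach} \<Rightarrow> 'a" and st +
  fixes Aloc :: "int set \<Rightarrow> 'a set"
  assumes ql: "quasi_local sc st Aloc"
begin

lemmas ql_unf = ql[unfolded quasi_local_def]
lemma ql_fd: "\<forall>I. interval I \<longrightarrow> star_subalg sc st (Aloc I) \<and> fin_dim_C sc (Aloc I)"
  using ql_unf[THEN conjunct2, THEN conjunct1] .
lemma ql_mono: "\<forall>I J. interval I \<longrightarrow> interval J \<longrightarrow> I \<subseteq> J \<longrightarrow> Aloc I \<subseteq> Aloc J"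
  using ql_unf[THEN conjunct2, THEN conjunct2, THEN conjunct1] .
lemma ql_comm: "\<forall>I J. interval I \<longrightarrow> interval J \<longrightarrow> I \<inter> J = {} \<longrightarrow>
        (\<forall>a\<in>Aloc I. \<forall>b\<in>Aloc J. a * b = b * a)"
  using ql_unf[THEN conjunct2, THEN conjunct2, THEN conjunct2, THEN conjunct1] .
lemma ql_dense: "closure (\<Union>{Aloc I | I. interval I}) = UNIV"
  using ql_unf[THEN conjunct2, THEN conjunct2, THEN conjunct2, THEN conjunct2] .

lemma fd_loc: "interval I \<Longrightarrow> fdalg (Aloc I)"
  using ql_fd unfolding fdalg_def by simp
lemma loc_mono: "interval I \<Longrightarrow> interval J \<Longrightarrow> I \<subseteq> J \<Longrightarrow> Aloc I \<subseteq> Aloc J"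
  using ql_mono by blast

lemma loc_dense: assumes "\<delta> > 0" shows "\<exists>J b'. interval J \<and> b' \<in> Aloc J \<and> norm (b - b') < \<delta>"
proof -
  have "b \<in> closure (\<Union>{Aloc I | I. interval I})" using ql_dense by simp
  then obtain y where y: "y \<in> \<Union>{Aloc I | I. interval I}" "dist y b < \<delta>"
    using assms unfolding closure_approachable by blast
  from y(1) obtain I where I: "interval I" "y \<in> Aloc I" by blast
  have "norm (b - y) < \<delta>" using y(2) by (simp add: dist_norm norm_minus_commute)
  with I show ?thesis by blast
qed

lemma posn_global: "posn (st b * b)"
proof (rule posn_approx)
  fix \<delta> :: real assume "\<delta> > 0"
  then obtain J b' where "interval J" "b' \<in> Aloc J" "norm (b - b') < \<delta>" using loc_dense by blast
  thus "\<exists>b'. norm (b - b') < \<delta> \<and> posn (st b' * b')" using pos_starmult[OF fd_loc] by blast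
qed

end



context vector_space begin

lemma dim_strict:
  assumes "subspace V'" "V' \<subseteq> V" "e \<in> V" "e \<notin> V'" "V \<subseteq> span G" "finite G"
  shows "dim V' < dim V"
proof -
  obtain B' where B': "B' \<subseteq> V'" "independent B'" "V' \<subseteq> span B'" "card B' = dim V'"
    using basis_exists[of V'] by blast
  obtain BV where BV: "BV \<subseteq> V" "independent BV" "V \<subseteq> span BV" "card BV = dim V"
    using basis_exists[of V] by blast
  have finBV: "finite BV" using independent_span_bound[OF assms(6) BV(2)] BV(1) assms(5) by blast
  have "span B' \<subseteq> V'" using span_minimal[OF B'(1) assms(1)] .
  hence "e \<notin> span B'" using assms(4) by blast
  hence ind: "independent (insert e B')" using independent_insertI B'(2) by blast
  have "insert e B' \<subseteq> span BV" using B'(1) assms(2,3) BV(3) by blast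
  from independent_span_bound[OF finBV ind this]
  have "finite (insert e B')" "card (insert e B') \<le> card BV" by auto
  moreover have "e \<notin> B'" using B'(1) assms(4) by blast
  ultimately show ?thesis using B'(4) BV(4) by simp
qed

lemma fin_dim_of_span:
  assumes "subspace V" "V \<subseteq> span G" "finite G"
  shows "\<exists>B. finite B \<and> B \<subseteq> V \<and> V = {\<Sum>b\<in>B. scale (c b) b | c. True}"
proof -
  obtain B where B: "B \<subseteq> V" "independent B" "V \<subseteq> span B" "card B = dim V"
    using basis_exists[of V] by blast
  have finB: "finite B" using independent_span_bound[OF assms(3) B(2)] B(1) assms(2) by blast
  have "span B = V" using span_minimal[OF B(1) assms(1)] B(3) by blast
  hence "V = range (\<lambda>u. \<Sum>v\<in>B. scale (u v) v)" using span_finite[OF finB] by simp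
  thus ?thesis using finB B(1) by blast
qed

lemma fin_dim_span_gen:
  assumes "\<exists>B. finite B \<and> B \<subseteq> V \<and> V = {\<Sum>b\<in>B. scale (c b) b | c. True}"
  obtains B where "finite B" "B \<subseteq> V" "V = span B"
proof -
  obtain B where B: "finite B" "B \<subseteq> V" "V = {\<Sum>b\<in>B. scale (c b) b | c. True}" using assms by blast
  have "V = span B" unfolding span_finite[OF B(1)] B(3) by auto
  with B that show ?thesis by blast
qed

end

context cstar begin

lemma gen_sub: "star_subalg sc st (gen_cstar sc st S)"
  unfolding gen_cstar_def star_subalg_def by blast

lemma gen_super: "S \<subseteq> gen_cstar sc st S"
  unfolding gen_cstar_def by blast

end

locale corr = qlocal sc st Aloc for sc :: "complex \<Rightarrow> 'a::{real_normed_algebra_1,banach} \<Rightarrow> 'a" and st Aloc +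
  fixes scX :: "complex \<Rightarrow> 'x::ab_group_add \<Rightarrow> 'x" and ra :: "'x \<Rightarrow> 'a \<Rightarrow> 'x"
    and la :: "'a \<Rightarrow> 'x \<Rightarrow> 'x" and ip :: "'x \<Rightarrow> 'x \<Rightarrow> 'a"
  assumes corr: "correspondence sc st scX ra la ip"
begin

lemmas corr_unf = corr[unfolded correspondence_def]

lemma scX_add_left: "scX (c + d) x = scX c x + scX d x"
  using corr_unf[THEN conjunct1] by blast
lemma scX_add_right: "scX c (x + y) = scX c x + scX c y"
  using corr_unf[THEN conjunct2, THEN conjunct1] by blast
lemma scX_mult: "scX (c * d) x = scX c (scX d x)"
  using corr_unf[THEN conjunct2, THEN conjunct2, THEN conjunct1] by blast
lemma scX_one: "scX 1 x = x"
  using corr_unf[THEN conjunct2, THEN conjunct2, THEN conjunct2, THEN conjunct1] by blast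
lemma ra_add_left: "ra (x + y) a = ra x a + ra y a"
  using corr_unf[THEN conjunct2, THEN conjunct2, THEN conjunct2, THEN conjunct2, THEN conjunct1] by blast
lemma ra_add_right: "ra x (a + b) = ra x a + ra x b"
  using corr_unf[THEN conjunct2, THEN conjunct2, THEN conjunct2, THEN conjunct2, THEN conjunct2, THEN conjunct1] by blast
lemma ra_mult: "ra x (a * b) = ra (ra x a) b"
  using corr_unf[THEN conjunct2, THEN conjunct2, THEN conjunct2, THEN conjunct2, THEN conjunct2, THEN conjunct2, THEN conjunct1] by blast
lemma ra_one: "ra x 1 = x"
  using corr_unf[THEN conjunct2, THEN conjunct2, THEN conjunct2, THEN conjunct2, THEN conjunct2, THEN conjunct2, THEN conjunct2, THEN conjunct1] by blast
lemma ra_scX: "ra (scX c x) a = scX c (ra x a)"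
  using corr_unf[THEN conjunct2, THEN conjunct2, THEN conjunct2, THEN conjunct2, THEN conjunct2, THEN conjunct2, THEN conjunct2, THEN conjunct2, THEN conjunct1] by blast
lemma ra_sc: "ra x (sc c a) = scX c (ra x a)"
  using corr_unf[THEN conjunct2, THEN conjunct2, THEN conjunct2, THEN conjunct2, THEN conjunct2, THEN conjunct2, THEN conjunct2, THEN conjunct2, THEN conjunct2, THEN conjunct1] by blast
lemma la_add_left: "la (a + b) x = la a x + la b x"
  using corr_unf[THEN conjunct2, THEN conjunct2, THEN conjunct2, THEN conjunct2, THEN conjunct2, THEN conjunct2, THEN conjunct2, THEN conjunct2, THEN conjunct2, THEN conjunct2, THEN conjunct1] by blast
lemma la_add_right: "la a (x + y) = la a x + la a y"
  using corr_unf[THEN conjunct2, THEN conjunct2, THEN conjunct2, THEN conjunct2, THEN conjunct2, THEN conjunct2, THEN conjunct2, THEN conjunct2, THEN conjunct2, THEN conjunct2, THEN conjunct2, THEN conjunct1] by blast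
lemma la_mult: "la (a * b) x = la a (la b x)"
  using corr_unf[THEN conjunct2, THEN conjunct2, THEN conjunct2, THEN conjunct2, THEN conjunct2, THEN conjunct2, THEN conjunct2, THEN conjunct2, THEN conjunct2, THEN conjunct2, THEN conjunct2, THEN conjunct2, THEN conjunct1] by blast
lemma la_one: "la 1 x = x"
  using corr_unf[THEN conjunct2, THEN conjunct2, THEN conjunct2, THEN conjunct2, THEN conjunct2, THEN conjunct2, THEN conjunct2, THEN conjunct2, THEN conjunct2, THEN conjunct2, THEN conjunct2, THEN conjunct2, THEN conjunct2, THEN conjunct1] by blast
lemma la_sc: "la (sc c a) x = scX c (la a x)"
  using corr_unf[THEN conjunct2, THEN conjunct2, THEN conjunct2, THEN conjunct2, THEN conjunct2, THEN conjunct2, THEN conjunct2, THEN conjunct2, THEN conjunct2, THEN conjunct2, THEN conjunct2, THEN conjunct2, THEN conjunct2, THEN conjunct2, THEN conjunct1] by blast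
lemma la_scX: "la a (scX c x) = scX c (la a x)"
  using corr_unf[THEN conjunct2, THEN conjunct2, THEN conjunct2, THEN conjunct2, THEN conjunct2, THEN conjunct2, THEN conjunct2, THEN conjunct2, THEN conjunct2, THEN conjunct2, THEN conjunct2, THEN conjunct2, THEN conjunct2, THEN conjunct2, THEN conjunct2, THEN conjunct1] by blast
lemma la_ra: "la a (ra x b) = ra (la a x) b"
  using corr_unf[THEN conjunct2, THEN conjunct2, THEN conjunct2, THEN conjunct2, THEN conjunct2, THEN conjunct2, THEN conjunct2, THEN conjunct2, THEN conjunct2, THEN conjunct2, THEN conjunct2, THEN conjunct2, THEN conjunct2, THEN conjunct2, THEN conjunct2, THEN conjunct2, THEN conjunct1] by blast
lemma ip_la: "ip (la a x) y = ip x (la (st a) y)"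
  using corr_unf[THEN conjunct2, THEN conjunct2, THEN conjunct2, THEN conjunct2, THEN conjunct2, THEN conjunct2, THEN conjunct2, THEN conjunct2, THEN conjunct2, THEN conjunct2, THEN conjunct2, THEN conjunct2, THEN conjunct2, THEN conjunct2, THEN conjunct2, THEN conjunct2, THEN conjunct2, THEN conjunct1] by blast
lemma ip_add_right: "ip x (y + z) = ip x y + ip x z"
  using corr_unf[THEN conjunct2, THEN conjunct2, THEN conjunct2, THEN conjunct2, THEN conjunct2, THEN conjunct2, THEN conjunct2, THEN conjunct2, THEN conjunct2, THEN conjunct2, THEN conjunct2, THEN conjunct2, THEN conjunct2, THEN conjunct2, THEN conjunct2, THEN conjunct2, THEN conjunct2, THEN conjunct2, THEN conjunct1] by blast
lemma ip_scX: "ip x (scX c y) = sc c (ip x y)"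
  using corr_unf[THEN conjunct2, THEN conjunct2, THEN conjunct2, THEN conjunct2, THEN conjunct2, THEN conjunct2, THEN conjunct2, THEN conjunct2, THEN conjunct2, THEN conjunct2, THEN conjunct2, THEN conjunct2, THEN conjunct2, THEN conjunct2, THEN conjunct2, THEN conjunct2, THEN conjunct2, THEN conjunct2, THEN conjunct2, THEN conjunct1] by blast
lemma ip_ra: "ip x (ra y a) = ip x y * a"
  using corr_unf[THEN conjunct2, THEN conjunct2, THEN conjunct2, THEN conjunct2, THEN conjunct2, THEN conjunct2, THEN conjunct2, THEN conjunct2, THEN conjunct2, THEN conjunct2, THEN conjunct2, THEN conjunct2, THEN conjunct2, THEN conjunct2, THEN conjunct2, THEN conjunct2, THEN conjunct2, THEN conjunct2, THEN conjunct2, THEN conjunct2, THEN conjunct1] by blast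
lemma ip_sym: "ip y x = st (ip x y)"
  using corr_unf[THEN conjunct2, THEN conjunct2, THEN conjunct2, THEN conjunct2, THEN conjunct2, THEN conjunct2, THEN conjunct2, THEN conjunct2, THEN conjunct2, THEN conjunct2, THEN conjunct2, THEN conjunct2, THEN conjunct2, THEN conjunct2, THEN conjunct2, THEN conjunct2, THEN conjunct2, THEN conjunct2, THEN conjunct2, THEN conjunct2, THEN conjunct2, THEN conjunct1] by blast
lemma ip_pos: "\<exists>b. ip x x = st b * b"
  using corr_unf[THEN conjunct2, THEN conjunct2, THEN conjunct2, THEN conjunct2, THEN conjunct2, THEN conjunct2, THEN conjunct2, THEN conjunct2, THEN conjunct2, THEN conjunct2, THEN conjunct2, THEN conjunct2, THEN conjunct2, THEN conjunct2, THEN conjunct2, THEN conjunct2, THEN conjunct2, THEN conjunct2, THEN conjunct2, THEN conjunct2, THEN conjunct2, THEN conjunct2, THEN conjunct1] by blast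
lemma ip_def: "ip x x = 0 \<longrightarrow> x = 0"
  using corr_unf[THEN conjunct2, THEN conjunct2, THEN conjunct2, THEN conjunct2, THEN conjunct2, THEN conjunct2, THEN conjunct2, THEN conjunct2, THEN conjunct2, THEN conjunct2, THEN conjunct2, THEN conjunct2, THEN conjunct2, THEN conjunct2, THEN conjunct2, THEN conjunct2, THEN conjunct2, THEN conjunct2, THEN conjunct2, THEN conjunct2, THEN conjunct2, THEN conjunct2, THEN conjunct2, THEN conjunct1] by blast

sublocale vsX: vector_space scX
  by unfold_locales (simp_all add: scX_add_left scX_add_right scX_mult scX_one)

lemma ra_zero_left[simp]: "ra 0 a = 0"
  using ra_add_left[of 0 0 a] by simp
lemma ra_zero_right[simp]: "ra x 0 = 0"
  using ra_add_right[of x 0 0] by simp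
lemma ra_minus_right: "ra x (- a) = - ra x a"
  using ra_add_right[of x a "-a"] by (simp add: eq_neg_iff_add_eq_0 add.commute)
lemma ra_diff_right: "ra x (a - b) = ra x a - ra x b"
  using ra_add_right[of x a "-b"] ra_minus_right[of x b] by simp
lemma ra_minus_left: "ra (- x) a = - ra x a"
  using ra_add_left[of x "-x" a] by (simp add: eq_neg_iff_add_eq_0 add.commute)
lemma ra_diff_left: "ra (x - y) a = ra x a - ra y a"
  using ra_add_left[of x "-y" a] ra_minus_left[of y a] by simp
lemma ra_sum_right: "ra x (sum f A) = (\<Sum>i\<in>A. ra x (f i))"
  by (induction A rule: infinite_finite_induct) (auto simp: ra_add_right)
lemma ra_sum_left: "ra (sum f A) a = (\<Sum>i\<in>A. ra (f i) a)"
  by (induction A rule: infinite_finite_induct) (auto simp: ra_add_left)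
lemma la_zero_right[simp]: "la a 0 = 0"
  using la_add_right[of a 0 0] by simp
lemma ip_zero_right[simp]: "ip x 0 = 0"
  using ip_add_right[of x 0 0] by simp
lemma ip_zero_left[simp]: "ip 0 x = 0"
  using ip_sym[of 0 x] by simp
lemma ip_minus_right: "ip x (- y) = - ip x y"
  using ip_add_right[of x y "-y"] by (simp add: eq_neg_iff_add_eq_0 add.commute)
lemma ip_diff_right: "ip x (y - z) = ip x y - ip x z"
  using ip_add_right[of x y "-z"] ip_minus_right[of x z] by simp
lemma ip_sum_right: "ip x (sum f A) = (\<Sum>i\<in>A. ip x (f i))"
  by (induction A rule: infinite_finite_induct) (auto simp: ip_add_right)
lemma ip_ra_left: "ip (ra x a) y = st a * ip x y"
proof -
  have "ip (ra x a) y = st (ip y (ra x a))" by (rule ip_sym)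
  also have "\<dots> = st a * ip x y" by (simp add: ip_ra st_mult ip_sym[of x y])
  finally show ?thesis .
qed
lemma ip_la_left': "ip (la (st a) x) y = ip x (la a y)"
  using ip_la[of "st a" x y] by simp


definition Comm :: "int set \<Rightarrow> 'a set" where
  "Comm I = {x. \<forall>a\<in>Acompl sc st Aloc I. x * a = a * x}"

lemma acomp_sub: "star_subalg sc st (Acompl sc st Aloc I)"
  unfolding Acompl_def by (rule gen_sub)

lemma acomp_st: "a \<in> Acompl sc st Aloc I \<Longrightarrow> st a \<in> Acompl sc st Aloc I"
  using acomp_sub unfolding star_subalg_def by blast

lemma comm_sub: "star_subalg sc st (Comm I)"
  unfolding star_subalg_def
proof (intro conjI ballI allI)
  show "0 \<in> Comm I" "1 \<in> Comm I" unfolding Comm_def by auto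
next
  fix a b assume a: "a \<in> Comm I" and b: "b \<in> Comm I"
  show "a + b \<in> Comm I" using a b unfolding Comm_def by (simp add: distrib_left distrib_right)
  show "a * b \<in> Comm I" using a b unfolding Comm_def by (simp add: mult.assoc) (metis mult.assoc)
next
  fix c a assume a: "a \<in> Comm I"
  show "sc c a \<in> Comm I" using a unfolding Comm_def by (simp add: sc_mult_left sc_mult_right)
next
  fix a assume a: "a \<in> Comm I"
  show "st a \<in> Comm I" unfolding Comm_def
  proof (intro CollectI ballI)
    fix y assume y: "y \<in> Acompl sc st Aloc I"
    have "a * st y = st y * a" using a acomp_st[OF y] unfolding Comm_def by blast
    hence "st (a * st y) = st (st y * a)" by simp
    thus "st a * y = y * st a" by (simp add: st_mult)
  qed
qed

abbreviation XI where "XI I \<equiv> Xloc sc st Aloc ra la I"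

lemma XI_sub: "vsX.subspace (XI I)"
  unfolding vsX.subspace_def Xloc_def
  by (auto simp: la_add_right ra_add_left la_scX ra_scX)

lemma XI_ra: assumes "x \<in> XI I" "a \<in> Comm I" shows "ra x a \<in> XI I"
  unfolding Xloc_def
proof (intro CollectI ballI)
  fix c assume c: "c \<in> Acompl sc st Aloc I"
  have "la c (ra x a) = ra (la c x) a" by (rule la_ra)
  also have "\<dots> = ra (ra x c) a" using assms(1) c unfolding Xloc_def by simp
  also have "\<dots> = ra x (c * a)" by (simp add: ra_mult)
  also have "c * a = a * c" using assms(2) c unfolding Comm_def by simp
  also have "ra x (a * c) = ra (ra x a) c" by (simp add: ra_mult)
  finally show "la c (ra x a) = ra (ra x a) c" .
qed

lemma XI_ip: assumes "x \<in> XI I" "y \<in> XI I" shows "ip x y \<in> Comm I"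
  unfolding Comm_def
proof (intro CollectI ballI)
  fix a assume a: "a \<in> Acompl sc st Aloc I"
  have "ip x y * a = ip x (ra y a)" by (simp add: ip_ra)
  also have "\<dots> = ip x (la a y)" using assms(2) a unfolding Xloc_def by simp
  also have "\<dots> = ip (la (st a) x) y" by (simp add: ip_la_left')
  also have "\<dots> = ip (ra x (st a)) y" using assms(1) acomp_st[OF a] unfolding Xloc_def by simp
  also have "\<dots> = a * ip x y" by (simp add: ip_ra_left)
  finally show "ip x y * a = a * ip x y" .
qed

lemma ip_posn: "posn (ip x x)"
proof -
  obtain b where "ip x x = st b * b" using ip_pos by blast
  thus ?thesis using posn_global by simp
qed

lemma ip_sa: "st (ip x x) = ip x x"
  using ip_sym[of x x] by simp

lemma normalized_vector:
  assumes K: "star_subalg sc st K" and C: "fdalg C" "K \<subseteq> C"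
    and V: "\<forall>y\<in>V. \<forall>a\<in>K. ra y a \<in> V" "\<forall>y\<in>V. ip y y \<in> K"
    and x: "x \<in> V" "x \<noteq> 0"
  shows "\<exists>e E. e \<in> V \<and> e \<noteq> 0 \<and> ip e e = E \<and> ra e E = e \<and> st E = E \<and> E * E = E"
proof -
  define p where "p = ip x x"
  have pK: "p \<in> K" using V(2) x(1) unfolding p_def by blast
  have psa: "st p = p" unfolding p_def by (rule ip_sa)
  have p0: "p \<noteq> 0" using ip_def x(2) unfolding p_def by blast
  obtain L P where LP: "pfam L P" "p = (\<Sum>l\<in>L. l *\<^sub>R P l)"
      and PE: "\<forall>E. star_subalg sc st E \<and> p \<in> E \<longrightarrow> (\<forall>l\<in>L. P l \<in> E)"
    using spectral[of C p] C pK psa unfolding fdalg_def by blast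
  have PK: "P l \<in> K" if "l \<in> L" for l using PE K pK that by blast
  have pp: "posn p" unfolding p_def by (rule ip_posn)
  have nn: "l \<ge> 0" if "l \<in> L" for l
    using pos_eig[OF LP(1), of "norm p" "\<lambda>l. l" l] pp LP(2) that unfolding posn_def by simp
  obtain lm where lam: "lm \<in> L" "lm \<noteq> 0"
  proof (rule ccontr)
    assume "\<not> thesis"
    hence "\<forall>l\<in>L. l = 0" using that by blast
    hence "p = 0" using LP(2) by (simp add: sum.neutral)
    thus False using p0 by simp
  qed
  have lpos: "lm > 0" using nn[OF lam(1)] lam(2) by simp
  define E where "E = P lm"
  have Esa: "st E = E" and Eid: "E * E = E" and E0: "E \<noteq> 0"
    using LP(1) lam(1) unfolding pfam_def E_def by auto
  have pE: "p * E = lm *\<^sub>R E" unfolding E_def LP(2) using pfam_projmult[OF LP(1) lam(1), of "\<lambda>l. l"] by simp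
  have Ep: "E * p = lm *\<^sub>R E"
  proof -
    have "st (p * E) = st (lm *\<^sub>R E)" using pE by simp
    thus ?thesis by (simp add: st_mult psa Esa st_scaleR)
  qed
  define u where "u = (1 / sqrt lm) *\<^sub>R E"
  have uK: "u \<in> K"
  proof -
    have "sc (of_real (1 / sqrt lm)) E \<in> K" using K PK[OF lam(1)] unfolding star_subalg_def E_def by blast
    thus ?thesis unfolding u_def by (simp only: sc_real)
  qed
  have usa: "st u = u" unfolding u_def by (simp add: st_scaleR Esa)
  have uE: "u * E = u" unfolding u_def by (simp add: Eid)
  define e where "e = ra x u"
  have eV: "e \<in> V" unfolding e_def using V(1) x(1) uK by blast
  have ee: "ip e e = E"
  proof -
    have "ip e e = st u * (p * u)" unfolding e_def p_def by (simp add: ip_ra_left ip_ra mult.assoc)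
    also have "\<dots> = u * (p * u)" using usa by simp
    also have "\<dots> = (1 / lm) *\<^sub>R (E * (p * E))" unfolding u_def using lpos by (simp add: mult.assoc)
    also have "\<dots> = E" using lpos by (simp add: pE Eid)
    finally show ?thesis .
  qed
  have eE: "ra e E = e" unfolding e_def by (simp add: ra_mult[symmetric] uE)
  have e0: "e \<noteq> 0" using ee E0 by auto
  show ?thesis using eV e0 ee eE Esa Eid by blast
qed


lemma frame_exists:
  assumes K: "star_subalg sc st K" and C: "fdalg C" "K \<subseteq> C" and G: "finite G"
  shows "vsX.subspace V \<Longrightarrow> V \<subseteq> vsX.span G \<Longrightarrow> (\<forall>y\<in>V. \<forall>a\<in>K. ra y a \<in> V) \<Longrightarrow>
    (\<forall>x\<in>V. \<forall>y\<in>V. ip x y \<in> K) \<Longrightarrow> \<exists>F. finite F \<and> F \<subseteq> V \<and> (\<forall>y\<in>V. y = (\<Sum>f\<in>F. ra f (ip f y)))"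
proof (induction "vsX.dim V" arbitrary: V rule: less_induct)
  case less
  note sub = less.prems(1) and VG = less.prems(2) and Vra = less.prems(3) and Vip = less.prems(4)
  show ?case
  proof (cases "V \<subseteq> {0}")
    case True
    thus ?thesis by (intro exI[of _ "{}"]) auto
  next
    case False
    then obtain x where x: "x \<in> V" "x \<noteq> 0" by blast
    have Vip2: "\<forall>y\<in>V. ip y y \<in> K" using Vip by blast
    obtain e E where eE: "e \<in> V" "e \<noteq> 0" "ip e e = E" "ra e E = e" "st E = E" "E * E = E"
      using normalized_vector[OF K C Vra Vip2 x] by blast
    define V' where "V' = {y \<in> V. ra e (ip e y) = 0}"
    have ipe_ra: "ip e (ra e a) = E * a" for a using eE(3) by (simp add: ip_ra)
    have ra_E: "ra e (E * a) = ra e a" for a using eE(4) by (simp add: ra_mult)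
    have sub': "vsX.subspace V'"
      unfolding vsX.subspace_def V'_def using sub unfolding vsX.subspace_def
      by (auto simp: ip_add_right ra_add_right ip_scX ra_sc)
    have V'V: "V' \<subseteq> V" unfolding V'_def by blast
    have eV': "e \<notin> V'" unfolding V'_def using eE by simp
    have dim: "vsX.dim V' < vsX.dim V" by (rule vsX.dim_strict[OF sub' V'V eE(1) eV' VG G])
    have V'ra: "\<forall>y\<in>V'. \<forall>a\<in>K. ra y a \<in> V'"
      unfolding V'_def using Vra by (auto simp: ip_ra ra_mult)
    have V'ip: "\<forall>x\<in>V'. \<forall>y\<in>V'. ip x y \<in> K" using Vip V'V by blast
    obtain F' where F': "finite F'" "F' \<subseteq> V'" "\<forall>y\<in>V'. y = (\<Sum>f\<in>F'. ra f (ip f y))"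
      using less.hyps[OF dim sub' _ V'ra V'ip] V'V VG by blast
    have orthe: "ip f e = 0" if "f \<in> V'" for f
    proof -
      have "ra e (ip e f) = 0" using that unfolding V'_def by blast
      hence "ip e (ra e (ip e f)) = 0" by simp
      hence "E * ip e f = 0" by (simp add: ipe_ra)
      moreover have "ip e f = st E * ip e f" using eE(4) ip_ra_left[of e E f] by simp
      ultimately have "ip e f = 0" using eE(5) by simp
      thus ?thesis using ip_sym[of e f] by (metis st_st st_zero)
    qed
    have "\<forall>y\<in>V. y = (\<Sum>f\<in>insert e F'. ra f (ip f y))"
    proof
      fix y assume y: "y \<in> V"
      define z where "z = ra e (ip e y)"
      have zV: "z \<in> V" unfolding z_def using Vra Vip eE(1) y by blast
      have yz: "y - z \<in> V'"
      proof -
        have "y - z \<in> V" using vsX.subspace_diff[OF sub y zV] .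
        moreover have "ra e (ip e (y - z)) = 0"
          unfolding z_def by (simp add: ip_diff_right ra_diff_right ipe_ra ra_E)
        ultimately show ?thesis unfolding V'_def by blast
      qed
      have "y - z = (\<Sum>f\<in>F'. ra f (ip f (y - z)))" using F'(3) yz by blast
      also have "\<dots> = (\<Sum>f\<in>F'. ra f (ip f y))"
      proof (rule sum.cong)
        fix f assume "f \<in> F'"
        hence "ip f e = 0" using orthe F'(2) by blast
        hence "ip f z = 0" unfolding z_def by (simp add: ip_ra)
        thus "ra f (ip f (y - z)) = ra f (ip f y)" by (simp add: ip_diff_right)
      qed simp
      finally have "y - z = (\<Sum>f\<in>F'. ra f (ip f y))" .
      moreover have "e \<notin> F'" using eV' F'(2) by blast
      ultimately show "y = (\<Sum>f\<in>insert e F'. ra f (ip f y))"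
        using F'(1) unfolding z_def by (simp add: algebra_simps)
    qed
    moreover have "insert e F' \<subseteq> V" using eE(1) F'(2) V'V by blast
    ultimately show ?thesis using F'(1) by blast
  qed
qed


lemma haag_T: assumes "weak_haag sc st Aloc"
  obtains T where "\<And>I. interval I \<Longrightarrow> Comm I \<subseteq> Aloc (nbhd T I)"
proof -
  have "\<exists>T::nat. \<forall>I. interval I \<longrightarrow> {x. \<forall>a\<in>Acompl sc st Aloc I. x * a = a * x} \<subseteq> Aloc (nbhd T I)"
    using assms unfolding weak_haag_def .
  then obtain T where T: "\<forall>I. interval I \<longrightarrow> {x. \<forall>a\<in>Acompl sc st Aloc I. x * a = a * x} \<subseteq> Aloc (nbhd T I)" ..
  have "Comm I \<subseteq> Aloc (nbhd T I)" if "interval I" for I using T that unfolding Comm_def by simp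
  thus ?thesis using that by blast
qed

lemma frame_expand:
  assumes F: "finite F" "\<forall>y\<in>M. y = (\<Sum>f\<in>F. ra f (ip f y))" and x: "x \<in> right_span ra M"
  shows "x = (\<Sum>f\<in>F. ra f (ip f x))"
proof -
  obtain n :: nat and xs ys where x': "x = (\<Sum>i<n. ra (xs i) (ys i))" "\<forall>i<n. xs i \<in> M"
    using x unfolding right_span_def by blast
  have "(\<Sum>f\<in>F. ra f (ip f x)) = (\<Sum>f\<in>F. \<Sum>i<n. ra (ra f (ip f (xs i))) (ys i))"
    unfolding x'(1) by (simp add: ip_sum_right ip_ra ra_sum_right ra_mult)
  also have "\<dots> = (\<Sum>i<n. \<Sum>f\<in>F. ra (ra f (ip f (xs i))) (ys i))" by (rule sum.swap)
  also have "\<dots> = (\<Sum>i<n. ra (\<Sum>f\<in>F. ra f (ip f (xs i))) (ys i))" by (simp add: ra_sum_left)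
  also have "\<dots> = (\<Sum>i<n. ra (xs i) (ys i))"
    by (rule sum.cong) (use F(2) x'(2) in auto)
  finally show ?thesis using x'(1) by simp
qed

lemma dhr_to_frame:
  assumes H: "weak_haag sc st Aloc" and D: "DHR_bimodule sc st Aloc scX ra la"
  shows "\<exists>S::nat. \<forall>I. interval I \<longrightarrow> card I \<ge> S \<longrightarrow> (\<exists>B. B \<subseteq> XI I \<and> proj_basis ra ip B)"
proof -
  obtain T where T: "\<And>I. interval I \<Longrightarrow> Comm I \<subseteq> Aloc (nbhd T I)" using haag_T[OF H] by blast
  have "\<exists>R::nat. \<forall>I. interval I \<longrightarrow> card I \<ge> R \<longrightarrow>
     fin_dim_C scX (XI I) \<and> right_span ra (XI I) = UNIV"
    using D unfolding DHR_bimodule_def .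
  then obtain R :: nat where R: "\<forall>I. interval I \<longrightarrow> card I \<ge> R \<longrightarrow>
     fin_dim_C scX (XI I) \<and> right_span ra (XI I) = UNIV" ..
  have "\<exists>B. B \<subseteq> XI I \<and> proj_basis ra ip B" if I: "interval I" "card I \<ge> R" for I
  proof -
    have fdrs: "fin_dim_C scX (XI I) \<and> right_span ra (XI I) = UNIV" using R I by simp
    hence fd: "fin_dim_C scX (XI I)" and rs: "right_span ra (XI I) = UNIV" by simp_all
    have "\<exists>B. finite B \<and> B \<subseteq> XI I \<and> XI I = {\<Sum>b\<in>B. scX (c b) b | c. True}"
      using fd unfolding fin_dim_C_def .
    then obtain G where G: "finite G" "G \<subseteq> XI I" "XI I = vsX.span G"
      using vsX.fin_dim_span_gen[of "XI I"] by blast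
    have C: "fdalg (Aloc (nbhd T I))" using fd_loc interval_nbhd I(1) by blast
    have h1: "vsX.subspace (XI I)" by (rule XI_sub)
    have h2: "XI I \<subseteq> vsX.span G" using G(3) by simp
    have h3: "\<forall>y\<in>XI I. \<forall>a\<in>Comm I. ra y a \<in> XI I" using XI_ra by blast
    have h4: "\<forall>x\<in>XI I. \<forall>y\<in>XI I. ip x y \<in> Comm I" using XI_ip by blast
    obtain F where F: "finite F" "F \<subseteq> XI I" "\<forall>y\<in>XI I. y = (\<Sum>f\<in>F. ra f (ip f y))"
      using frame_exists[OF comm_sub C T[OF I(1)] G(1) h1 h2 h3 h4] by blast
    have "\<forall>x. x = (\<Sum>f\<in>F. ra f (ip f x))"
    proof
      fix x :: 'x
      have "x \<in> right_span ra (XI I)" using rs by simp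
      thus "x = (\<Sum>f\<in>F. ra f (ip f x))" by (rule frame_expand[OF F(1) F(3)])
    qed
    hence "proj_basis ra ip F" unfolding proj_basis_def using F(1) by blast
    thus ?thesis using F(2) by blast
  qed
  thus ?thesis by blast
qed

lemma frame_to_dhr:
  assumes H: "weak_haag sc st Aloc"
    and S: "\<exists>S::nat. \<forall>I. interval I \<longrightarrow> card I \<ge> S \<longrightarrow> (\<exists>B. B \<subseteq> XI I \<and> proj_basis ra ip B)"
  shows "DHR_bimodule sc st Aloc scX ra la"
proof -
  obtain T where T: "\<And>I. interval I \<Longrightarrow> Comm I \<subseteq> Aloc (nbhd T I)" using haag_T[OF H] by blast
  obtain S :: nat where S: "\<forall>I. interval I \<longrightarrow> card I \<ge> S \<longrightarrow> (\<exists>B. B \<subseteq> XI I \<and> proj_basis ra ip B)"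
    using assms by blast
  have "fin_dim_C scX (XI I) \<and> right_span ra (XI I) = UNIV" if I: "interval I" "card I \<ge> S" for I
  proof -
    obtain B where B: "B \<subseteq> XI I" "finite B" "\<forall>x. x = (\<Sum>b\<in>B. ra b (ip b x))"
      using S I unfolding proj_basis_def by blast
    have "x \<in> right_span ra (XI I)" for x
    proof -
      obtain h where h: "bij_betw h {0..<card B} B" using ex_bij_betw_nat_finite[OF B(2)] by blast
      have "x = (\<Sum>b\<in>B. ra b (ip b x))" using B(3) by blast
      also have "\<dots> = (\<Sum>i\<in>{0..<card B}. ra (h i) (ip (h i) x))"
        using sum.reindex_bij_betw[OF h, of "\<lambda>b. ra b (ip b x)"] by simp
      also have "\<dots> = (\<Sum>i<card B. ra (h i) (ip (h i) x))" by (simp add: atLeast0LessThan)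
      finally have eqn: "x = (\<Sum>i<card B. ra (h i) (ip (h i) x))" .
      have hB: "\<forall>i<card B. h i \<in> XI I" using h B(1) bij_betwE by fastforce
      have "\<exists>(n::nat) xs ys. x = (\<Sum>i<n. ra (xs i) (ys i)) \<and> (\<forall>i<n. xs i \<in> XI I)"
        by (rule exI[of _ "card B"], rule exI[of _ h], rule exI[of _ "\<lambda>i. ip (h i) x"]) (use eqn hB in blast)
      thus ?thesis unfolding right_span_def by blast
    qed
    hence rs: "right_span ra (XI I) = UNIV" by blast
    have C: "fdalg (Aloc (nbhd T I))" using fd_loc interval_nbhd I(1) by blast
    obtain E where E: "finite E" "E \<subseteq> Aloc (nbhd T I)" "Aloc (nbhd T I) = vs.span E"
      using fin_dim_span C unfolding fdalg_def by blast
    define G where "G = (\<lambda>(b, e). ra b e) ` (B \<times> E)"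
    have finG: "finite G" unfolding G_def using B(2) E(1) by simp
    have "XI I \<subseteq> vsX.span G"
    proof
      fix x assume x: "x \<in> XI I"
      have "ra b (ip b x) \<in> vsX.span G" if b: "b \<in> B" for b
      proof -
        have "ip b x \<in> Comm I" using XI_ip B(1) b x by blast
        hence "ip b x \<in> vs.span E" using T[OF I(1)] E(3) by blast
        then obtain u where u: "ip b x = (\<Sum>e\<in>E. sc (u e) e)" using vs.span_finite[OF E(1)] by blast
        have "ra b (ip b x) = (\<Sum>e\<in>E. scX (u e) (ra b e))" unfolding u by (simp add: ra_sum_right ra_sc)
        also have "\<dots> \<in> vsX.span G"
          by (intro vsX.span_sum vsX.span_scale vsX.span_base) (use b in \<open>auto simp: G_def\<close>)
        finally show ?thesis .
      qed
      hence sG: "(\<Sum>b\<in>B. ra b (ip b x)) \<in> vsX.span G" by (intro vsX.span_sum) auto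
      have ex: "x = (\<Sum>b\<in>B. ra b (ip b x))" using B(3) by blast
      show "x \<in> vsX.span G" by (subst ex) (rule sG)
    qed
    hence "fin_dim_C scX (XI I)" unfolding fin_dim_C_def using vsX.fin_dim_of_span[OF XI_sub _ finG] by blast
    thus ?thesis using rs by blast
  qed
  thus ?thesis unfolding DHR_bimodule_def by blast
qed

end

theorem mainTheorem2:
  fixes sc :: "complex \<Rightarrow> 'a::{real_normed_algebra_1,banach} \<Rightarrow> 'a"
    and st :: "'a \<Rightarrow> 'a"
    and Aloc :: "int set \<Rightarrow> 'a set"
    and scX :: "complex \<Rightarrow> 'x::ab_group_add \<Rightarrow> 'x"
    and ra :: "'x \<Rightarrow> 'a \<Rightarrow> 'x"
    and la :: "'a \<Rightarrow> 'x \<Rightarrow> 'x"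
    and ip :: "'x \<Rightarrow> 'x \<Rightarrow> 'a"
  assumes "quasi_local sc st Aloc"
    and "weak_haag sc st Aloc"
    and "correspondence sc st scX ra la ip"
  shows "DHR_bimodule sc st Aloc scX ra la \<longleftrightarrow>
    (\<exists>S::nat. \<forall>I. interval I \<longrightarrow> card I \<ge> S \<longrightarrow>
       (\<exists>B. B \<subseteq> Xloc sc st Aloc ra la I \<and> proj_basis ra ip B))"
proof -
  have cs: "cstar_algebra sc st" using assms(1) unfolding quasi_local_def by (rule conjunct1)
  interpret corr sc st Aloc scX ra la ip
    by (rule corr.intro[OF qlocal.intro[OF cstar.intro[OF cs]]]) (use assms in \<open>simp_all add: qlocal_axioms_def corr_axioms_def\<close>)
  show ?thesis using dhr_to_frame[OF assms(2)] frame_to_dhr[OF assms(2)] by blast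
qed


end
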